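(* Let $d\ge 3$ and let $\mathbf{u}=(u_1,\dots,u_d)$, $\rho>0$ be a smooth solution on $\mathbb{E}^d$ of the ideal barotropic equations $\partial_t \mathbf{u}+(\mathbf{u}\cdot\nabla)\mathbf{u}=-\nabla \Pi$, $\partial_t\rho+\nabla\cdot(\rho\mathbf{u})=0$ with $p=p(\rho)$, $\nabla\Pi=\nabla p/\rho$, which is a real Schur flow: $\partial_{x_k}u_j=0$ whenever $\lceil k/2\rceil>\lceil j/2\rceil$. Let $M=\lfloor\frac{d+1}{2}\rfloor$ and $\Omega_i=d\big(u_{2i-1}dx_{2i-1}+u_{2i}dx_{2i}\big)$ for $i=1,\dots,M$ (with $u_{d+1}\equiv0$ and the term $u_{d+1}dx_{d+1}$ omitted when $d$ is odd). Then any differential form obtained from $\Omega_1,\dots,\Omega_M$ by (constant-coefficient) linear sums and wedge products is also Lie-invariant (frozen-in), i.e. satisfies $(\partial_t+L_{\mathbf{u}})\Theta=0$.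
   Context: $L_{\mathbf{u}}$ denotes the Lie derivative along $\mathbf{u}$ acting on differential forms; $x_1,\dots,x_d$ are Cartesian coordinates on Euclidean space $\mathbb{E}^d$; $\lfloor\cdot\rfloor$ denotes the integer part. *)

theory Defs
  imports "HOL-Analysis.Analysis"
begin

text \<open>Euclidean space E^d is modelled as real^'n with d = CARD('n); the Cartesian
coordinate x_k (k = 1..d) of a point x is x $ idx k for a fixed bijection
idx from {1..d} onto the index type.\<close>

type_synonym 'n sfield = "real \<Rightarrow> real^'n \<Rightarrow> real"

text \<open>A time-dependent differential form (possibly of mixed degree) on E^d is given by
its coefficients: Theta t x S is the coefficient of dx_{s1} /\ ... /\ dx_{sk}, where
S = {s1 < ... < sk} is a subset of {1..d}.\<close>

type_synonym 'n tform = "real \<Rightarrow> real^'n \<Rightarrow> nat set \<Rightarrow> real"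

definition pdt :: "'n sfield \<Rightarrow> 'n sfield" where
  "pdt f t x = deriv (\<lambda>s. f s x) t"

definition pdx :: "(nat \<Rightarrow> 'n::finite) \<Rightarrow> nat \<Rightarrow> 'n sfield \<Rightarrow> 'n sfield" where
  "pdx idx k f t x =
     (if k \<in> {1..CARD('n)} then deriv (\<lambda>s. f t (x + s *\<^sub>R axis (idx k) 1)) 0 else 0)"

definition pdir :: "(nat \<Rightarrow> 'n::finite) \<Rightarrow> nat \<Rightarrow> 'n sfield \<Rightarrow> 'n sfield" where
  "pdir idx j f = (if j = 0 then pdt f else pdx idx j f)"

fun pdits :: "(nat \<Rightarrow> 'n::finite) \<Rightarrow> nat list \<Rightarrow> 'n sfield \<Rightarrow> 'n sfield" where
  "pdits idx [] f = f"
| "pdits idx (j # js) f = pdir idx j (pdits idx js f)"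

definition smooth_tx :: "(nat \<Rightarrow> 'n::finite) \<Rightarrow> real set \<Rightarrow> 'n sfield \<Rightarrow> bool" where
  "smooth_tx idx T f \<longleftrightarrow>
     (\<forall>js. set js \<subseteq> {0..CARD('n)} \<longrightarrow>
        continuous_on (T \<times> UNIV) (\<lambda>(t, x). pdits idx js f t x) \<and>
        (\<forall>t\<in>T. \<forall>x. (\<lambda>s. pdits idx js f s x) differentiable (at t)) \<and>
        (\<forall>t\<in>T. \<forall>x. \<forall>k\<in>{1..CARD('n)}.
            (\<lambda>s. pdits idx js f t (x + s *\<^sub>R axis (idx k) 1)) differentiable (at 0)))"

definition smooth_pos :: "(real \<Rightarrow> real) \<Rightarrow> bool" where
  "smooth_pos p \<longleftrightarrow> (\<forall>n. \<forall>r>0. ((deriv ^^ n) p) field_differentiable (at r))"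

text \<open>Velocity component u_j (j = 1..d); u_j = 0 otherwise (in particular u_{d+1} = 0).\<close>
definition ucomp :: "(nat \<Rightarrow> 'n::finite) \<Rightarrow> (real \<Rightarrow> real^'n \<Rightarrow> real^'n) \<Rightarrow> nat \<Rightarrow> 'n sfield" where
  "ucomp idx u j t x = (if j \<in> {1..CARD('n)} then u t x $ idx j else 0)"

text \<open>Exterior derivative:  d(f dx_I) = sum_k d_k f dx_k /\ dx_I.\<close>
definition dform :: "(nat \<Rightarrow> 'n::finite) \<Rightarrow> 'n tform \<Rightarrow> 'n tform" where
  "dform idx \<Theta> t x S =
     (\<Sum>k\<in>S. (-1) ^ card {s\<in>S. s < k} * pdx idx k (\<lambda>t' x'. \<Theta> t' x' (S - {k})) t x)"

definition iprod :: "(nat \<Rightarrow> 'n::finite) \<Rightarrow> (real \<Rightarrow> real^'n \<Rightarrow> real^'n) \<Rightarrow> 'n tform \<Rightarrow> 'n tform" where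
  "iprod idx u \<Theta> t x S =
     (\<Sum>j\<in>{1..CARD('n)} - S. (-1) ^ card {s\<in>S. s < j} * ucomp idx u j t x * \<Theta> t x (insert j S))"

text \<open>Lie derivative along u (at each fixed time), via Cartan's formula L_u = d i_u + i_u d.\<close>
definition lie :: "(nat \<Rightarrow> 'n::finite) \<Rightarrow> (real \<Rightarrow> real^'n \<Rightarrow> real^'n) \<Rightarrow> 'n tform \<Rightarrow> 'n tform" where
  "lie idx u \<Theta> t x S = dform idx (iprod idx u \<Theta>) t x S + iprod idx u (dform idx \<Theta>) t x S"

text \<open>Wedge product: dx_A /\ dx_B = (-1)^{#{(a,b) in A x B. a > b}} dx_{A Un B} for disjoint A, B.\<close>
definition wedge :: "'n tform \<Rightarrow> 'n tform \<Rightarrow> 'n tform" where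
  "wedge \<alpha> \<beta> t x S =
     (\<Sum>A\<in>Pow S. (-1) ^ card {(a, b). a \<in> A \<and> b \<in> S - A \<and> b < a} * \<alpha> t x A * \<beta> t x (S - A))"

definition alpha1 :: "(nat \<Rightarrow> 'n::finite) \<Rightarrow> (real \<Rightarrow> real^'n \<Rightarrow> real^'n) \<Rightarrow> nat \<Rightarrow> 'n tform" where
  "alpha1 idx u i t x S =
     (if S = {2*i - 1} then ucomp idx u (2*i - 1) t x
      else if S = {2*i} then ucomp idx u (2*i) t x else 0)"

definition Omega :: "(nat \<Rightarrow> 'n::finite) \<Rightarrow> (real \<Rightarrow> real^'n \<Rightarrow> real^'n) \<Rightarrow> nat \<Rightarrow> 'n tform" where
  "Omega idx u i = dform idx (alpha1 idx u i)"

inductive_set gen_forms :: "(nat \<Rightarrow> 'n::finite) \<Rightarrow> (real \<Rightarrow> real^'n \<Rightarrow> real^'n) \<Rightarrow> nat \<Rightarrow> 'n tform set"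
  for idx u M where
  base: "i \<in> {1..M} \<Longrightarrow> Omega idx u i \<in> gen_forms idx u M"
| scale: "\<Theta> \<in> gen_forms idx u M \<Longrightarrow> (\<lambda>t x S. c * \<Theta> t x S) \<in> gen_forms idx u M"
| add: "\<Theta>1 \<in> gen_forms idx u M \<Longrightarrow> \<Theta>2 \<in> gen_forms idx u M \<Longrightarrow>
         (\<lambda>t x S. \<Theta>1 t x S + \<Theta>2 t x S) \<in> gen_forms idx u M"
| wedge: "\<Theta>1 \<in> gen_forms idx u M \<Longrightarrow> \<Theta>2 \<in> gen_forms idx u M \<Longrightarrow>
         wedge \<Theta>1 \<Theta>2 \<in> gen_forms idx u M"

definition lie_invariant :: "(nat \<Rightarrow> 'n::finite) \<Rightarrow> real set \<Rightarrow> (real \<Rightarrow> real^'n \<Rightarrow> real^'n) \<Rightarrow> 'n tform \<Rightarrow> bool" where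
  "lie_invariant idx T u \<Theta> \<longleftrightarrow>
     (\<forall>t\<in>T. \<forall>x. \<forall>S. S \<subseteq> {1..CARD('n)} \<longrightarrow>
        pdt (\<lambda>t' x'. \<Theta> t' x' S) t x + lie idx u \<Theta> t x S = 0)"

end

theory Submission
  imports Defs
begin


lemma abs_contra_aux: "\<bar>(x::real) - A\<bar> < \<bar>A - B\<bar> / 2 \<Longrightarrow> \<bar>y - B\<bar> < \<bar>A - B\<bar> / 2 \<Longrightarrow> x = y \<Longrightarrow> False"
  by (cases "x \<ge> A"; cases "x \<ge> B"; cases "A \<ge> B") (auto simp: abs_if split: if_splits)

lemma schwarz_generic:
  fixes g ga gb gab gba :: "real \<Rightarrow> real \<Rightarrow> real"
  assumes e: "e > 0"
  and d1: "\<And>a b. \<bar>a\<bar> < e \<Longrightarrow> \<bar>b\<bar> < e \<Longrightarrow> ((\<lambda>s. g s b) has_real_derivative ga a b) (at a)"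
  and d2: "\<And>a b. \<bar>a\<bar> < e \<Longrightarrow> \<bar>b\<bar> < e \<Longrightarrow> ((\<lambda>s. g a s) has_real_derivative gb a b) (at b)"
  and d12: "\<And>a b. \<bar>a\<bar> < e \<Longrightarrow> \<bar>b\<bar> < e \<Longrightarrow> ((\<lambda>s. ga a s) has_real_derivative gab a b) (at b)"
  and d21: "\<And>a b. \<bar>a\<bar> < e \<Longrightarrow> \<bar>b\<bar> < e \<Longrightarrow> ((\<lambda>s. gb s b) has_real_derivative gba a b) (at a)"
  and c12: "continuous (at (0,0)) (\<lambda>z. gab (fst z) (snd z))"
  and c21: "continuous (at (0,0)) (\<lambda>z. gba (fst z) (snd z))"
  shows "gab 0 0 = gba 0 0"
proof -
  have key: "\<exists>a b a' b'. 0 < a \<and> a < h \<and> 0 < b \<and> b < h \<and> 0 < a' \<and> a' < h \<and> 0 < b' \<and> b' < h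
      \<and> gab a b = gba a' b'" if h: "0 < h" "h < e" for h
  proof -
    have "\<And>x. 0 \<le> x \<Longrightarrow> x \<le> h \<Longrightarrow> ((\<lambda>s. g s h - g s 0) has_real_derivative (ga x h - ga x 0)) (at x)"
      using h by (intro derivative_intros d1) auto
    then obtain a where a: "0 < a" "a < h" and
      ea: "(g h h - g h 0) - (g 0 h - g 0 0) = (h - 0) * (ga a h - ga a 0)"
      using MVT2[of 0 h "\<lambda>s. g s h - g s 0" "\<lambda>s. ga s h - ga s 0"] h by auto
    obtain b where b: "0 < b" "b < h" and
      eb: "ga a h - ga a 0 = (h - 0) * gab a b"
      using MVT2[of 0 h "\<lambda>s. ga a s" "\<lambda>s. gab a s"] h a d12[of a] by auto
    have "\<And>x. 0 \<le> x \<Longrightarrow> x \<le> h \<Longrightarrow> ((\<lambda>s. g h s - g 0 s) has_real_derivative (gb h x - gb 0 x)) (at x)"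
      using h by (intro derivative_intros d2) auto
    then obtain b' where b': "0 < b'" "b' < h" and
      eb': "(g h h - g 0 h) - (g h 0 - g 0 0) = (h - 0) * (gb h b' - gb 0 b')"
      using MVT2[of 0 h "\<lambda>s. g h s - g 0 s" "\<lambda>s. gb h s - gb 0 s"] h by auto
    obtain a' where a': "0 < a'" "a' < h" and
      ea': "gb h b' - gb 0 b' = (h - 0) * gba a' b'"
      using MVT2[of 0 h "\<lambda>s. gb s b'" "\<lambda>s. gba s b'"] h b' d21[of _ b'] by auto
    have "h * h * gab a b = h * h * gba a' b'"
      using ea eb eb' ea' by (simp add: algebra_simps)
    hence "gab a b = gba a' b'" using h by simp
    thus ?thesis using a b a' b' by blast
  qed
  show ?thesis
  proof (rule ccontr)
    assume ne: "gab 0 0 \<noteq> gba 0 0"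
    define \<epsilon> where "\<epsilon> = \<bar>gab 0 0 - gba 0 0\<bar> / 2"
    have \<epsilon>: "\<epsilon> > 0" using ne by (simp add: \<epsilon>_def)
    obtain \<delta>1 where \<delta>1: "\<delta>1 > 0" "\<And>z. dist z (0,0) < \<delta>1 \<Longrightarrow> dist (gab (fst z) (snd z)) (gab 0 0) < \<epsilon>"
      using c12 \<epsilon> unfolding continuous_at_eps_delta by fastforce
    obtain \<delta>2 where \<delta>2: "\<delta>2 > 0" "\<And>z. dist z (0,0) < \<delta>2 \<Longrightarrow> dist (gba (fst z) (snd z)) (gba 0 0) < \<epsilon>"
      using c21 \<epsilon> unfolding continuous_at_eps_delta by fastforce
    define h where "h = min e (min \<delta>1 \<delta>2) / 3"
    have h: "0 < h" "h < e" "2 * h < \<delta>1" "2 * h < \<delta>2" using e \<delta>1 \<delta>2 by (auto simp: h_def)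
    obtain a b a' b' where ab: "0 < a" "a < h" "0 < b" "b < h" "0 < a'" "a' < h" "0 < b'" "b' < h"
      and eq: "gab a b = gba a' b'" using key[OF h(1,2)] by blast
    have n1: "dist (a,b) (0,0) < \<delta>1"
      using norm_Pair_le[of a b] ab h by (simp add: dist_norm)
    have n2: "dist (a',b') (0,0) < \<delta>2"
      using norm_Pair_le[of a' b'] ab h by (simp add: dist_norm)
    have "\<bar>gab a b - gab 0 0\<bar> < \<epsilon>" using \<delta>1(2)[OF n1] by (simp add: dist_real_def)
    moreover have "\<bar>gba a' b' - gba 0 0\<bar> < \<epsilon>" using \<delta>2(2)[OF n2] by (simp add: dist_real_def)
    ultimately show False using eq abs_contra_aux unfolding \<epsilon>_def by blast
  qed
qed


definition dxk :: "(nat \<Rightarrow> 'n::finite) \<Rightarrow> nat \<Rightarrow> 'n sfield \<Rightarrow> real \<Rightarrow> real^'n \<Rightarrow> bool" where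
  "dxk idx k f t x \<longleftrightarrow> (k \<in> {1..CARD('n)} \<longrightarrow> (\<lambda>s. f t (x + s *\<^sub>R axis (idx k) 1)) differentiable (at 0))"

definition dtt :: "'n sfield \<Rightarrow> real \<Rightarrow> real^'n \<Rightarrow> bool" where
  "dtt f t x \<longleftrightarrow> (\<lambda>s. f s x) differentiable (at t)"

context fixes idx :: "nat \<Rightarrow> 'n::finite" begin

lemma pdx_DERIV:
  "k \<in> {1..CARD('n)} \<Longrightarrow> dxk idx k f t x \<Longrightarrow>
   ((\<lambda>s. f t (x + s *\<^sub>R axis (idx k) 1)) has_real_derivative pdx idx k f t x) (at 0)"
  by (simp add: pdx_def dxk_def DERIV_deriv_iff_real_differentiable)

lemma pdx_via:
  "k \<in> {1..CARD('n)} \<Longrightarrow> ((\<lambda>s. f t (x + s *\<^sub>R axis (idx k) 1)) has_real_derivative D) (at 0)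
   \<Longrightarrow> pdx idx k f t x = D"
  by (simp add: pdx_def DERIV_imp_deriv)

lemma pdx_out: "k \<notin> {1..CARD('n)} \<Longrightarrow> pdx idx k f t x = 0"
  unfolding pdx_def by (simp only: if_False)

lemma pdt_DERIV: "dtt f t x \<Longrightarrow> ((\<lambda>s. f s x) has_real_derivative pdt f t x) (at t)"
  by (simp add: pdt_def dtt_def DERIV_deriv_iff_real_differentiable)

lemma pdt_via: "((\<lambda>s. f s x) has_real_derivative D) (at t) \<Longrightarrow> pdt f t x = D"
  by (simp add: pdt_def DERIV_imp_deriv)

lemma dxk_I: "(k \<in> {1..CARD('n)} \<Longrightarrow> ((\<lambda>s. f t (x + s *\<^sub>R axis (idx k) 1)) has_real_derivative D) (at 0))
   \<Longrightarrow> dxk idx k f t x"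
  unfolding dxk_def using real_differentiable_def by blast

lemma dtt_I: "((\<lambda>s. f s x) has_real_derivative D) (at t) \<Longrightarrow> dtt f t x"
  unfolding dtt_def using real_differentiable_def by blast

lemma pdx_const: "pdx idx k (\<lambda>t x. c) t x = 0"
  by (cases "k \<in> {1..CARD('n)}") (auto simp: pdx_def)

lemma dxk_const: "dxk idx k (\<lambda>t x. c) t x"
  by (rule dxk_I[where D=0]) auto

lemma pdx_add:
  assumes "dxk idx k f t x" "dxk idx k g t x"
  shows "pdx idx k (\<lambda>t x. f t x + g t x) t x = pdx idx k f t x + pdx idx k g t x"
  and "dxk idx k (\<lambda>t x. f t x + g t x) t x"
proof -
  have *: "((\<lambda>s. f t (x + s *\<^sub>R axis (idx k) 1) + g t (x + s *\<^sub>R axis (idx k) 1)) has_real_derivative pdx idx k f t x + pdx idx k g t x) (at 0)"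
    if k: "k \<in> {1..CARD('n)}"
    using DERIV_add[OF pdx_DERIV[OF k assms(1)] pdx_DERIV[OF k assms(2)]] by (simp add: algebra_simps)
  show "pdx idx k (\<lambda>t x. f t x + g t x) t x = pdx idx k f t x + pdx idx k g t x"
    by (cases "k \<in> {1..CARD('n)}") (auto simp: pdx_out intro!: pdx_via *)
  show "dxk idx k (\<lambda>t x. f t x + g t x) t x"
    by (rule dxk_I) (rule *)
qed

lemma pdx_diff:
  assumes "dxk idx k f t x" "dxk idx k g t x"
  shows "pdx idx k (\<lambda>t x. f t x - g t x) t x = pdx idx k f t x - pdx idx k g t x"
  and "dxk idx k (\<lambda>t x. f t x - g t x) t x"
proof -
  have *: "((\<lambda>s. f t (x + s *\<^sub>R axis (idx k) 1) - g t (x + s *\<^sub>R axis (idx k) 1)) has_real_derivative pdx idx k f t x - pdx idx k g t x) (at 0)"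
    if k: "k \<in> {1..CARD('n)}"
    using DERIV_diff[OF pdx_DERIV[OF k assms(1)] pdx_DERIV[OF k assms(2)]] by (simp add: algebra_simps)
  show "pdx idx k (\<lambda>t x. f t x - g t x) t x = pdx idx k f t x - pdx idx k g t x"
    by (cases "k \<in> {1..CARD('n)}") (auto simp: pdx_out intro!: pdx_via *)
  show "dxk idx k (\<lambda>t x. f t x - g t x) t x"
    by (rule dxk_I) (rule *)
qed

lemma pdx_mult:
  assumes "dxk idx k f t x" "dxk idx k g t x"
  shows "pdx idx k (\<lambda>t x. f t x * g t x) t x = pdx idx k f t x * g t x + f t x * pdx idx k g t x"
  and "dxk idx k (\<lambda>t x. f t x * g t x) t x"
proof -
  have *: "((\<lambda>s. f t (x + s *\<^sub>R axis (idx k) 1) * g t (x + s *\<^sub>R axis (idx k) 1)) has_real_derivative pdx idx k f t x * g t x + f t x * pdx idx k g t x) (at 0)"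
    if k: "k \<in> {1..CARD('n)}"
    using DERIV_mult'[OF pdx_DERIV[OF k assms(1)] pdx_DERIV[OF k assms(2)]] by (simp add: algebra_simps)
  show "pdx idx k (\<lambda>t x. f t x * g t x) t x = pdx idx k f t x * g t x + f t x * pdx idx k g t x"
    by (cases "k \<in> {1..CARD('n)}") (auto simp: pdx_out intro!: pdx_via *)
  show "dxk idx k (\<lambda>t x. f t x * g t x) t x"
    by (rule dxk_I) (rule *)
qed

lemma pdx_cmult:
  assumes "dxk idx k f t x"
  shows "pdx idx k (\<lambda>t x. c * f t x) t x = c * pdx idx k f t x"
  and "dxk idx k (\<lambda>t x. c * f t x) t x"
  using pdx_mult[OF dxk_const assms, of c] by (simp_all add: pdx_const)

lemma pdx_sum:
  assumes "\<And>i. i \<in> I \<Longrightarrow> dxk idx k (f i) t x"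
  shows "pdx idx k (\<lambda>t x. \<Sum>i\<in>I. f i t x) t x = (\<Sum>i\<in>I. pdx idx k (f i) t x)"
  and "dxk idx k (\<lambda>t x. \<Sum>i\<in>I. f i t x) t x"
proof -
  have *: "((\<lambda>s. \<Sum>i\<in>I. f i t (x + s *\<^sub>R axis (idx k) 1)) has_real_derivative (\<Sum>i\<in>I. pdx idx k (f i) t x)) (at 0)"
    if k: "k \<in> {1..CARD('n)}"
    by (rule DERIV_sum) (rule pdx_DERIV[OF k assms])
  show "pdx idx k (\<lambda>t x. \<Sum>i\<in>I. f i t x) t x = (\<Sum>i\<in>I. pdx idx k (f i) t x)"
    by (cases "k \<in> {1..CARD('n)}") (auto simp: pdx_out intro!: pdx_via *)
  show "dxk idx k (\<lambda>t x. \<Sum>i\<in>I. f i t x) t x"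
    by (rule dxk_I) (rule *)
qed

lemma pdx_cong: "(\<And>y. f t y = g t y) \<Longrightarrow> pdx idx k f t x = pdx idx k g t x"
  by (simp add: pdx_def)

lemma dxk_cong: "(\<And>y. f t y = g t y) \<Longrightarrow> dxk idx k f t x = dxk idx k g t x"
  by (simp add: dxk_def)

lemma pdx_zero_fun: "(\<And>y. f t y = 0) \<Longrightarrow> pdx idx k f t x = 0"
  using pdx_cong[of f t "\<lambda>t x. 0"] pdx_const by metis

lemma pdt_const: "pdt (\<lambda>t x. c) t x = 0"
  by (simp add: pdt_def)

lemma dtt_const: "dtt (\<lambda>t x. c) t x"
  by (rule dtt_I[where D=0]) auto

lemma pdt_add:
  assumes "dtt f t x" "dtt g t x"
  shows "pdt (\<lambda>t x. f t x + g t x) t x = pdt f t x + pdt g t x"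
  and "dtt (\<lambda>t x. f t x + g t x) t x"
proof -
  have *: "((\<lambda>s. f s x + g s x) has_real_derivative pdt f t x + pdt g t x) (at t)"
    using DERIV_add[OF pdt_DERIV[OF assms(1)] pdt_DERIV[OF assms(2)]] by (simp add: algebra_simps)
  show "pdt (\<lambda>t x. f t x + g t x) t x = pdt f t x + pdt g t x"
    by (rule pdt_via) (rule *)
  show "dtt (\<lambda>t x. f t x + g t x) t x"
    by (rule dtt_I) (rule *)
qed


lemma pdt_diff:
  assumes "dtt f t x" "dtt g t x"
  shows "pdt (\<lambda>t x. f t x - g t x) t x = pdt f t x - pdt g t x"
  and "dtt (\<lambda>t x. f t x - g t x) t x"
proof -
  have *: "((\<lambda>s. f s x - g s x) has_real_derivative pdt f t x - pdt g t x) (at t)"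
    using DERIV_diff[OF pdt_DERIV[OF assms(1)] pdt_DERIV[OF assms(2)]] by (simp add: algebra_simps)
  show "pdt (\<lambda>t x. f t x - g t x) t x = pdt f t x - pdt g t x"
    by (rule pdt_via) (rule *)
  show "dtt (\<lambda>t x. f t x - g t x) t x"
    by (rule dtt_I) (rule *)
qed


lemma pdt_mult:
  assumes "dtt f t x" "dtt g t x"
  shows "pdt (\<lambda>t x. f t x * g t x) t x = pdt f t x * g t x + f t x * pdt g t x"
  and "dtt (\<lambda>t x. f t x * g t x) t x"
proof -
  have *: "((\<lambda>s. f s x * g s x) has_real_derivative pdt f t x * g t x + f t x * pdt g t x) (at t)"
    using DERIV_mult'[OF pdt_DERIV[OF assms(1)] pdt_DERIV[OF assms(2)]] by (simp add: algebra_simps)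
  show "pdt (\<lambda>t x. f t x * g t x) t x = pdt f t x * g t x + f t x * pdt g t x"
    by (rule pdt_via) (rule *)
  show "dtt (\<lambda>t x. f t x * g t x) t x"
    by (rule dtt_I) (rule *)
qed


lemma pdt_cmult:
  assumes "dtt f t x"
  shows "pdt (\<lambda>t x. c * f t x) t x = c * pdt f t x"
  and "dtt (\<lambda>t x. c * f t x) t x"
  using pdt_mult[OF dtt_const assms, of c] by (simp_all add: pdt_const)

lemma pdt_sum:
  assumes "\<And>i. i \<in> I \<Longrightarrow> dtt (f i) t x"
  shows "pdt (\<lambda>t x. \<Sum>i\<in>I. f i t x) t x = (\<Sum>i\<in>I. pdt (f i) t x)"
  and "dtt (\<lambda>t x. \<Sum>i\<in>I. f i t x) t x"
proof -
  have *: "((\<lambda>s. \<Sum>i\<in>I. f i s x) has_real_derivative (\<Sum>i\<in>I. pdt (f i) t x)) (at t)"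
    by (rule DERIV_sum) (rule pdt_DERIV[OF assms])
  show "pdt (\<lambda>t x. \<Sum>i\<in>I. f i t x) t x = (\<Sum>i\<in>I. pdt (f i) t x)"
    by (rule pdt_via) (rule *)
  show "dtt (\<lambda>t x. \<Sum>i\<in>I. f i t x) t x"
    by (rule dtt_I) (rule *)
qed

lemma pdt_cong:
  assumes "open T" "t \<in> T" "\<And>s. s \<in> T \<Longrightarrow> f s x = g s x"
  shows "pdt f t x = pdt g t x"
proof -
  have "eventually (\<lambda>s. f s x = g s x) (nhds t)"
    using assms eventually_nhds by blast
  thus ?thesis unfolding pdt_def by (intro deriv_cong_ev) auto
qed

lemma dtt_cong:
  assumes "open T" "t \<in> T" "\<And>s. s \<in> T \<Longrightarrow> f s x = g s x"
  shows "dtt f t x = dtt g t x"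
proof -
  have "eventually (\<lambda>s. f s x = g s x) (nhds t)"
    using assms eventually_nhds by blast
  hence "\<And>D. ((\<lambda>s. f s x) has_real_derivative D) (at t) = ((\<lambda>s. g s x) has_real_derivative D) (at t)"
    by (intro DERIV_cong_ev) auto
  thus ?thesis unfolding dtt_def real_differentiable_def by simp
qed

lemma pdt_zero_fun:
  assumes "open T" "t \<in> T" "\<And>s. s \<in> T \<Longrightarrow> f s x = 0"
  shows "pdt f t x = 0"
  using pdt_cong[OF assms(1,2), of f x "\<lambda>t x. 0"] assms(3) pdt_const by metis

end


context fixes idx :: "nat \<Rightarrow> 'n::finite" begin


lemma smooth_tx_D:
  assumes "smooth_tx idx T f" "set js \<subseteq> {0..CARD('n)}"
  shows "continuous_on (T \<times> UNIV) (\<lambda>(t, x). pdits idx js f t x)"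
    and "t \<in> T \<Longrightarrow> dtt (pdits idx js f) t x"
    and "t \<in> T \<Longrightarrow> dxk idx k (pdits idx js f) t x"
  using assms unfolding smooth_tx_def dtt_def dxk_def by blast+

lemma smooth_dxk: "smooth_tx idx T f \<Longrightarrow> t \<in> T \<Longrightarrow> dxk idx k f t x"
  using smooth_tx_D(3)[of T f "[]"] by simp

lemma smooth_dtt: "smooth_tx idx T f \<Longrightarrow> t \<in> T \<Longrightarrow> dtt f t x"
  using smooth_tx_D(2)[of T f "[]"] by simp

lemma smooth_dxk_dxk: "smooth_tx idx T f \<Longrightarrow> t \<in> T \<Longrightarrow> dxk idx k (pdx idx l f) t x"
proof (cases "l \<in> {1..CARD('n)}")
  case True
  assume "smooth_tx idx T f" "t \<in> T"
  thus ?thesis using smooth_tx_D(3)[of T f "[l]"] True by (simp add: pdir_def)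
next
  case False
  have "pdx idx l f = (\<lambda>t x. 0)" by (intro ext pdx_out False)
  thus ?thesis by (simp add: dxk_const)
qed

lemma smooth_dtt_dxk: "smooth_tx idx T f \<Longrightarrow> t \<in> T \<Longrightarrow> dtt (pdx idx l f) t x"
proof (cases "l \<in> {1..CARD('n)}")
  case True
  assume "smooth_tx idx T f" "t \<in> T"
  thus ?thesis using smooth_tx_D(2)[of T f "[l]"] True by (simp add: pdir_def)
next
  case False
  have "pdx idx l f = (\<lambda>t x. 0)" by (intro ext pdx_out False)
  thus ?thesis by (simp add: dtt_const)
qed

lemma smooth_dxk_dxk_dxk: "smooth_tx idx T f \<Longrightarrow> t \<in> T \<Longrightarrow> dxk idx k (pdx idx m (pdx idx l f)) t x"
proof (cases "l \<in> {1..CARD('n)} \<and> m \<in> {1..CARD('n)}")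
  case True
  assume "smooth_tx idx T f" "t \<in> T"
  thus ?thesis using smooth_tx_D(3)[of T f "[m,l]"] True by (simp add: pdir_def)
next
  case False
  have "pdx idx m (pdx idx l f) t' y = 0" for t' y
  proof (cases "m \<in> {1..CARD('n)}")
    case True
    hence "l \<notin> {1..CARD('n)}" using False by blast
    thus ?thesis by (intro pdx_zero_fun pdx_out)
  qed (rule pdx_out)
  hence "pdx idx m (pdx idx l f) = (\<lambda>t x. 0)" by (intro ext)
  thus ?thesis by (simp add: dxk_const)
qed

end


lemma shift_deriv0:
  "((\<lambda>s. F (s + a)) has_real_derivative D) (at 0) \<Longrightarrow> (F has_real_derivative D) (at a)"
  using DERIV_shift[of F D 0 a] by simp

lemma cont_compose_at:
  fixes T :: "real set" and h :: "real \<Rightarrow> 'b::real_normed_vector \<Rightarrow> real"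
    and \<phi> :: "'c::real_normed_vector \<Rightarrow> real \<times> 'b"
  assumes "continuous_on (T \<times> UNIV) (\<lambda>(t, x). h t x)" "open T"
    and "continuous (at z) \<phi>" "\<phi> z = (t, x)" "t \<in> T"
  shows "continuous (at z) (\<lambda>z. h (fst (\<phi> z)) (snd (\<phi> z)))"
proof -
  have o: "open (T \<times> (UNIV :: 'b set))" using assms(2) by (simp add: open_Times)
  have "continuous (at (t, x)) (\<lambda>(t, x). h t x)"
    using assms(1) o assms(5) continuous_on_eq_continuous_at by fastforce
  hence "continuous (at z) ((\<lambda>(t, x). h t x) \<circ> \<phi>)"
    using continuous_at_compose[OF assms(3)] assms(4) by simp
  thus ?thesis by (simp add: o_def case_prod_unfold)
qed

lemma shift_deriv_t:
  "(F has_real_derivative D) (at (t + a)) \<Longrightarrow> ((\<lambda>s. F (t + s)) has_real_derivative D) (at a)"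
  using DERIV_shift[of F D a t] by (simp add: add.commute)

context fixes idx :: "nat \<Rightarrow> 'n::finite" begin

lemma schwarz_x:
  assumes sm: "smooth_tx idx T f" and T: "open T" "t \<in> T"
  shows "pdx idx k (pdx idx l f) t x = pdx idx l (pdx idx k f) t x"
proof (cases "k \<in> {1..CARD('n)} \<and> l \<in> {1..CARD('n)}")
  case False
  have z: "pdx idx k (pdx idx l f) t x = 0" if "\<not> (k \<in> {1..CARD('n)} \<and> l \<in> {1..CARD('n)})" for k l
  proof (cases "k \<in> {1..CARD('n)}")
    case True
    hence "l \<notin> {1..CARD('n)}" using that by blast
    thus ?thesis by (intro pdx_zero_fun pdx_out)
  next
    case False thus ?thesis by (rule pdx_out)
  qed
  show ?thesis using z[of k l] z[of l k] False by metis
next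
  case True
  hence k: "k \<in> {1..CARD('n)}" and l: "l \<in> {1..CARD('n)}" by auto
  define ek where "ek = axis (idx k) (1::real)"
  define el where "el = axis (idx l) (1::real)"
  define P where "P a b = x + a *\<^sub>R ek + b *\<^sub>R el" for a b
  have Pa: "P (s + a) b = P a b + s *\<^sub>R ek" for s a b by (simp add: P_def algebra_simps)
  have Pb: "P a (s + b) = P a b + s *\<^sub>R el" for s a b by (simp add: P_def algebra_simps)
  let ?g = "\<lambda>a b. f t (P a b)"
  let ?g1 = "\<lambda>a b. pdx idx k f t (P a b)"
  let ?g2 = "\<lambda>a b. pdx idx l f t (P a b)"
  let ?g12 = "\<lambda>a b. pdx idx l (pdx idx k f) t (P a b)"
  let ?g21 = "\<lambda>a b. pdx idx k (pdx idx l f) t (P a b)"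
  have "?g12 0 0 = ?g21 0 0"
  proof (rule schwarz_generic[where e=1 and g="?g" and ga="?g1" and gb="?g2" and gab="?g12" and gba="?g21"])
    fix a b :: real
    show "((\<lambda>s. ?g s b) has_real_derivative ?g1 a b) (at a)"
      apply (rule shift_deriv0)
      using pdx_DERIV[OF k smooth_dxk[OF sm T(2)], where x="P a b"] by (simp only: Pa ek_def)
    show "((\<lambda>s. ?g a s) has_real_derivative ?g2 a b) (at b)"
      apply (rule shift_deriv0)
      using pdx_DERIV[OF l smooth_dxk[OF sm T(2)], where x="P a b"] by (simp only: Pb el_def)
    show "((\<lambda>s. ?g1 a s) has_real_derivative ?g12 a b) (at b)"
      apply (rule shift_deriv0)
      using pdx_DERIV[OF l smooth_dxk_dxk[OF sm T(2), of l k "P a b"]] by (simp only: Pb el_def)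
    show "((\<lambda>s. ?g2 s b) has_real_derivative ?g21 a b) (at a)"
      apply (rule shift_deriv0)
      using pdx_DERIV[OF k smooth_dxk_dxk[OF sm T(2), of k l "P a b"]] by (simp only: Pa ek_def)
  next
    have c: "continuous_on (T \<times> UNIV) (\<lambda>(t, x). pdx idx l (pdx idx k f) t x)"
      using smooth_tx_D(1)[OF sm, of "[l,k]"] k l by (simp add: pdir_def)
    show "continuous (at (0, 0)) (\<lambda>z. ?g12 (fst z) (snd z))"
      using cont_compose_at[OF c T(1), where \<phi>="\<lambda>z. (t, P (fst z) (snd z))" and z="(0,0)" and t=t and x=x] T(2)
      by (simp add: P_def continuous_intros)
  next
    have c: "continuous_on (T \<times> UNIV) (\<lambda>(t, x). pdx idx k (pdx idx l f) t x)"
      using smooth_tx_D(1)[OF sm, of "[k,l]"] k l by (simp add: pdir_def)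
    show "continuous (at (0, 0)) (\<lambda>z. ?g21 (fst z) (snd z))"
      using cont_compose_at[OF c T(1), where \<phi>="\<lambda>z. (t, P (fst z) (snd z))" and z="(0,0)" and t=t and x=x] T(2)
      by (simp add: P_def continuous_intros)
  qed simp
  thus ?thesis by (simp add: P_def)
qed

lemma schwarz_tx:
  assumes sm: "smooth_tx idx T f" and T: "open T" "t \<in> T"
  shows "pdt (pdx idx k f) t x = pdx idx k (pdt f) t x"
proof (cases "k \<in> {1..CARD('n)}")
  case False
  have "pdx idx k f = (\<lambda>t x. 0)" by (intro ext pdx_out False)
  thus ?thesis using pdx_out[OF False] by (simp add: pdt_const)
next
  case k: True
  obtain e where e: "e > 0" "ball t e \<subseteq> T" using T openE by blast
  have tin: "t + a \<in> T" if "\<bar>a\<bar> < e" for a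
    using e that by (intro subsetD[OF e(2)]) (simp add: dist_real_def)
  define ek where "ek = axis (idx k) (1::real)"
  define P where "P b = x + b *\<^sub>R ek" for b
  have Pb: "P (s + b) = P b + s *\<^sub>R ek" for s b by (simp add: P_def algebra_simps)
  let ?g = "\<lambda>a b. f (t + a) (P b)"
  let ?g1 = "\<lambda>a b. pdt f (t + a) (P b)"
  let ?g2 = "\<lambda>a b. pdx idx k f (t + a) (P b)"
  let ?g12 = "\<lambda>a b. pdx idx k (pdt f) (t + a) (P b)"
  let ?g21 = "\<lambda>a b. pdt (pdx idx k f) (t + a) (P b)"
  have sm0: "dxk idx k (pdt f) s y" if "s \<in> T" for s y
    using smooth_tx_D(3)[OF sm, of "[0]"] that by (simp add: pdir_def)
  have "?g12 0 0 = ?g21 0 0"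
  proof (rule schwarz_generic[where e=e and g="?g" and ga="?g1" and gb="?g2" and gab="?g12" and gba="?g21"])
    fix a b :: real assume ab: "\<bar>a\<bar> < e" "\<bar>b\<bar> < e"
    show "((\<lambda>s. ?g s b) has_real_derivative ?g1 a b) (at a)"
      using shift_deriv_t[OF pdt_DERIV[OF smooth_dtt[OF sm tin[OF ab(1)]], where x="P b"]] by simp
    show "((\<lambda>s. ?g a s) has_real_derivative ?g2 a b) (at b)"
      apply (rule shift_deriv0)
      using pdx_DERIV[OF k smooth_dxk[OF sm tin[OF ab(1)]], where x="P b"] by (simp only: Pb ek_def)
    show "((\<lambda>s. ?g1 a s) has_real_derivative ?g12 a b) (at b)"
      apply (rule shift_deriv0)
      using pdx_DERIV[OF k sm0[OF tin[OF ab(1)]], where x="P b"] by (simp only: Pb ek_def)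
    show "((\<lambda>s. ?g2 s b) has_real_derivative ?g21 a b) (at a)"
      using shift_deriv_t[OF pdt_DERIV[OF smooth_dtt_dxk[OF sm tin[OF ab(1)], of k "P b"]]] by simp
  next
    have c: "continuous_on (T \<times> UNIV) (\<lambda>(t, x). pdx idx k (pdt f) t x)"
      using smooth_tx_D(1)[OF sm, of "[k,0]"] k by (simp add: pdir_def)
    show "continuous (at (0, 0)) (\<lambda>z. ?g12 (fst z) (snd z))"
      using cont_compose_at[OF c T(1), where \<phi>="\<lambda>z. (t + fst z, P (snd z))" and z="(0,0)" and t=t and x=x] T(2)
      by (simp add: P_def continuous_intros)
  next
    have c: "continuous_on (T \<times> UNIV) (\<lambda>(t, x). pdt (pdx idx k f) t x)"
      using smooth_tx_D(1)[OF sm, of "[0,k]"] k by (simp add: pdir_def)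
    show "continuous (at (0, 0)) (\<lambda>z. ?g21 (fst z) (snd z))"
      using cont_compose_at[OF c T(1), where \<phi>="\<lambda>z. (t + fst z, P (snd z))" and z="(0,0)" and t=t and x=x] T(2)
      by (simp add: P_def continuous_intros)
  qed (use e in simp)
  thus ?thesis by (simp add: P_def)
qed

end


definition invc :: "nat set \<Rightarrow> nat set \<Rightarrow> nat" where
  "invc A B = card {(a, b). a \<in> A \<and> b \<in> B \<and> b < a}"

definition sg :: "nat set \<Rightarrow> nat set \<Rightarrow> real" where
  "sg A B = (-1) ^ invc A B"

lemma inv_finite: "finite A \<Longrightarrow> finite B \<Longrightarrow> finite {(a, b). a \<in> A \<and> b \<in> B \<and> b < a}"
  by (rule finite_subset[of _ "A \<times> B"]) auto

lemma inv_Un_left: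
  assumes "finite A" "finite B" "finite C" "A \<inter> B = {}"
  shows "invc (A \<union> B) C = invc A C + invc B C"
proof -
  have "{(a, b). a \<in> A \<union> B \<and> b \<in> C \<and> b < a} =
        {(a, b). a \<in> A \<and> b \<in> C \<and> b < a} \<union> {(a, b). a \<in> B \<and> b \<in> C \<and> b < a}" by auto
  thus ?thesis unfolding invc_def using assms
    by (simp add: card_Un_disjoint inv_finite) (auto intro!: card_Un_disjoint inv_finite)
qed

lemma inv_Un_right:
  assumes "finite A" "finite B" "finite C" "B \<inter> C = {}"
  shows "invc A (B \<union> C) = invc A B + invc A C"
proof -
  have "{(a, b). a \<in> A \<and> b \<in> B \<union> C \<and> b < a} =
        {(a, b). a \<in> A \<and> b \<in> B \<and> b < a} \<union> {(a, b). a \<in> A \<and> b \<in> C \<and> b < a}" by auto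
  thus ?thesis unfolding invc_def using assms
    by (auto intro!: card_Un_disjoint inv_finite)
qed

lemma sg_Un_left:
  "finite A \<Longrightarrow> finite B \<Longrightarrow> finite C \<Longrightarrow> A \<inter> B = {} \<Longrightarrow> sg (A \<union> B) C = sg A C * sg B C"
  by (simp add: sg_def inv_Un_left power_add)

lemma sg_Un_right:
  "finite A \<Longrightarrow> finite B \<Longrightarrow> finite C \<Longrightarrow> B \<inter> C = {} \<Longrightarrow> sg A (B \<union> C) = sg A B * sg A C"
  by (simp add: sg_def inv_Un_right power_add)

lemma sg_insert_left:
  "finite A \<Longrightarrow> finite C \<Longrightarrow> k \<notin> A \<Longrightarrow> sg (insert k A) C = sg {k} C * sg A C"
  using sg_Un_left[of "{k}" A C] by simp

lemma sg_insert_right: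
  "finite A \<Longrightarrow> finite C \<Longrightarrow> k \<notin> C \<Longrightarrow> sg A (insert k C) = sg A {k} * sg A C"
  using sg_Un_right[of A "{k}" C] by simp

lemma sg_self: "sg {k} {k} = 1"
proof -
  have "{(a, b). a \<in> {k} \<and> b \<in> {k} \<and> b < a} = {}" by auto
  thus ?thesis unfolding sg_def invc_def by (simp only: card.empty power_0)
qed

lemma sg_sq: "sg A B * sg A B = 1"
  by (simp add: sg_def flip: power_add)

lemma sg_insert_self: "finite C \<Longrightarrow> sg {k} (insert k C) = sg {k} C"
proof (cases "k \<in> C")
  case False
  assume "finite C"
  thus ?thesis using sg_insert_right[of "{k}" C k] False by (simp add: sg_self)
qed (simp add: insert_absorb)

lemma sg_swap:
  assumes "finite A" "j \<notin> A"
  shows "sg A {j} * sg {j} A = (-1) ^ card A"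
proof -
  have e1: "{(a, b). a \<in> A \<and> b \<in> {j} \<and> b < a} = (\<lambda>a. (a, j)) ` {a \<in> A. j < a}" by auto
  have e2: "{(a, b). a \<in> {j} \<and> b \<in> A \<and> b < a} = (\<lambda>a. (j, a)) ` {a \<in> A. a < j}" by auto
  have c1: "invc A {j} = card {a \<in> A. j < a}"
    unfolding invc_def e1 by (rule card_image) (auto simp: inj_on_def)
  have c2: "invc {j} A = card {a \<in> A. a < j}"
    unfolding invc_def e2 by (rule card_image) (auto simp: inj_on_def)
  have "A = {a \<in> A. j < a} \<union> {a \<in> A. a < j}"
  proof (intro set_eqI iffI)
    fix x assume x: "x \<in> A"
    hence "x \<noteq> j" using assms(2) by blast
    thus "x \<in> {a \<in> A. j < a} \<union> {a \<in> A. a < j}" using x by (auto simp: nat_neq_iff)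
  qed auto
  hence "card A = card {a \<in> A. j < a} + card {a \<in> A. a < j}"
    using assms(1) by (metis (no_types, lifting) card_Un_disjoint disjoint_iff finite_Un mem_Collect_eq not_less_iff_gr_or_eq)
  thus ?thesis by (simp add: sg_def c1 c2 flip: power_add)
qed

lemma card_less_sg: "finite S \<Longrightarrow> (-1::real) ^ card {s \<in> S. s < j} = sg {j} S"
proof -
  have "{(a, b). a \<in> {j} \<and> b \<in> S \<and> b < a} = (\<lambda>a. (j, a)) ` {s \<in> S. s < j}" by auto
  hence "invc {j} S = card {s \<in> S. s < j}"
    unfolding invc_def by (metis (no_types, lifting) card_image inj_on_def prod.inject)
  thus ?thesis by (simp add: sg_def)
qed


lemma sg_sq': "sg A B * (sg A B * x) = x"
  by (metis mult.assoc mult_1 sg_sq)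

lemma sum_pow_in:
  assumes "finite S" "k \<in> S"
  shows "(\<Sum>B\<in>{B \<in> Pow S. k \<in> B}. f B) = (\<Sum>A\<in>Pow (S - {k}). f (insert k A))"
proof -
  have e: "{B \<in> Pow S. k \<in> B} = insert k ` Pow (S - {k})"
  proof (intro set_eqI iffI)
    fix B assume "B \<in> {B \<in> Pow S. k \<in> B}"
    hence "B = insert k (B - {k})" "B - {k} \<in> Pow (S - {k})" by auto
    thus "B \<in> insert k ` Pow (S - {k})" by blast
  qed (use assms in auto)
  have "inj_on (insert k) (Pow (S - {k}))"
  proof (rule inj_onI)
    fix A A' assume "A \<in> Pow (S - {k})" "A' \<in> Pow (S - {k})" "insert k A = insert k A'"
    moreover hence "k \<notin> A" "k \<notin> A'" by auto
    ultimately show "A = A'" by (metis Diff_insert_absorb)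
  qed
  thus ?thesis unfolding e by (simp add: sum.reindex)
qed

lemma swap_in:
  assumes "finite S"
  shows "(\<Sum>B\<in>Pow S. \<Sum>k\<in>B. g B k) = (\<Sum>k\<in>S. \<Sum>A\<in>Pow (S - {k}). g (insert k A) k)"
proof -
  have "(\<Sum>B\<in>Pow S. \<Sum>k\<in>B. g B k) = (\<Sum>B\<in>Pow S. \<Sum>k\<in>{k. k \<in> S \<and> k \<in> B}. g B k)"
    by (intro sum.cong refl) auto
  also have "\<dots> = (\<Sum>k\<in>S. \<Sum>B\<in>{B. B \<in> Pow S \<and> k \<in> B}. g B k)"
    using assms by (intro sum.swap_restrict) auto
  also have "\<dots> = (\<Sum>k\<in>S. \<Sum>A\<in>Pow (S - {k}). g (insert k A) k)"
    using assms by (intro sum.cong[OF refl] sum_pow_in) auto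
  finally show ?thesis .
qed

lemma swap_out:
  assumes "finite S"
  shows "(\<Sum>A\<in>Pow S. \<Sum>k\<in>S - A. g A k) = (\<Sum>k\<in>S. \<Sum>A\<in>Pow (S - {k}). g A k)"
proof -
  have "(\<Sum>A\<in>Pow S. \<Sum>k\<in>S - A. g A k) = (\<Sum>A\<in>Pow S. \<Sum>k\<in>{k. k \<in> S \<and> k \<notin> A}. g A k)"
    by (intro sum.cong refl) auto
  also have "\<dots> = (\<Sum>k\<in>S. \<Sum>A\<in>{A. A \<in> Pow S \<and> k \<notin> A}. g A k)"
    using assms by (intro sum.swap_restrict) auto
  also have "\<dots> = (\<Sum>k\<in>S. \<Sum>A\<in>Pow (S - {k}). g A k)"
    by (intro sum.cong refl) auto
  finally show ?thesis .
qed

lemma sum_pow_insert: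
  assumes "finite S" "j \<notin> S"
  shows "(\<Sum>A\<in>Pow (insert j S). f A) = (\<Sum>A\<in>Pow S. f A) + (\<Sum>A\<in>Pow S. f (insert j A))"
proof -
  have "inj_on (insert j) (Pow S)"
    unfolding inj_on_def using assms(2) by (metis PowD insert_ident subsetD)
  moreover have "Pow S \<inter> insert j ` Pow S = {}" using assms(2) by auto
  ultimately show ?thesis unfolding Pow_insert using assms(1)
    by (simp add: sum.union_disjoint sum.reindex)
qed

lemma sg_cases: "sg A B = 1 \<or> sg A B = -1"
  unfolding sg_def by (metis neg_one_even_power neg_one_odd_power)

lemma s1:
  assumes "finite S" "k \<in> S" "A \<subseteq> S - {k}"
  shows "sg {k} S * sg A (S - {k} - A) = sg (insert k A) (S - insert k A) * sg {k} (insert k A)"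
proof -
  define C where "C = S - {k} - A"
  have fin: "finite A" "finite C" using assms finite_subset by (auto simp: C_def)
  have S: "S = insert k (A \<union> C)" and kA: "k \<notin> A" and kC: "k \<notin> C" and AC: "A \<inter> C = {}"
    and SC: "S - insert k A = C"
    using assms by (auto simp: C_def)
  have e1: "sg {k} S = sg {k} A * sg {k} C"
    unfolding S using fin AC by (simp only: sg_insert_self finite_Un sg_Un_right finite.emptyI finite_insert)
  have e2: "sg (insert k A) C = sg {k} C * sg A C" using fin kA by (rule sg_insert_left)
  have e3: "sg {k} (insert k A) = sg {k} A" using fin by (simp only: sg_insert_self)
  show ?thesis unfolding C_def[symmetric] SC e1 e2 e3 by (simp only: mult_ac)
qed

lemma s2:
  assumes "finite S" "k \<in> S" "A \<subseteq> S - {k}"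
  shows "sg {k} S * sg A (S - {k} - A) = sg A (S - A) * (-1) ^ card A * sg {k} (S - A)"
proof -
  define C where "C = S - {k} - A"
  have fin: "finite A" "finite C" using assms finite_subset by (auto simp: C_def)
  have S: "S = insert k (A \<union> C)" and kA: "k \<notin> A" and kC: "k \<notin> C" and AC: "A \<inter> C = {}"
    and SA: "S - A = insert k C"
    using assms by (auto simp: C_def)
  have e1: "sg {k} S = sg {k} A * sg {k} C"
    unfolding S using fin AC by (simp only: sg_insert_self finite_Un sg_Un_right finite.emptyI finite_insert)
  have e2: "sg A (insert k C) = sg A {k} * sg A C" using fin kC by (rule sg_insert_right)
  have e3: "sg {k} (insert k C) = sg {k} C" using fin by (simp only: sg_insert_self)
  have sw: "(-1) ^ card A = sg A {k} * sg {k} A" using sg_swap[OF fin(1) kA] by simp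
  show ?thesis unfolding C_def[symmetric] SA sw e1 e2 e3
    using sg_cases[of A "{k}"] by (elim disjE) (simp_all add: algebra_simps)
qed

lemma s3:
  assumes "finite S" "j \<notin> S" "A \<subseteq> S"
  shows "sg {j} S * sg (insert j A) (S - A) = sg A (S - A) * sg {j} A"
proof -
  define C where "C = S - A"
  have fin: "finite A" "finite C" using assms finite_subset by (auto simp: C_def)
  have S: "S = A \<union> C" and jA: "j \<notin> A" and AC: "A \<inter> C = {}"
    using assms by (auto simp: C_def)
  have e1: "sg {j} S = sg {j} A * sg {j} C"
    unfolding S using fin AC by (simp only: finite_Un sg_Un_right finite.emptyI finite_insert)
  have e2: "sg (insert j A) C = sg {j} C * sg A C" using fin jA by (rule sg_insert_left)
  show ?thesis unfolding C_def[symmetric] e1 e2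
    using sg_cases[of "{j}" C] by (elim disjE) (simp_all add: algebra_simps)
qed

lemma s4:
  assumes "finite S" "j \<notin> S" "A \<subseteq> S"
  shows "sg {j} S * sg A (insert j (S - A)) = sg A (S - A) * (-1) ^ card A * sg {j} (S - A)"
proof -
  define C where "C = S - A"
  have fin: "finite A" "finite C" using assms finite_subset by (auto simp: C_def)
  have S: "S = A \<union> C" and jA: "j \<notin> A" and jC: "j \<notin> C" and AC: "A \<inter> C = {}"
    using assms by (auto simp: C_def)
  have e1: "sg {j} S = sg {j} A * sg {j} C"
    unfolding S using fin AC by (simp only: finite_Un sg_Un_right finite.emptyI finite_insert)
  have e2: "sg A (insert j C) = sg A {j} * sg A C" using fin jC by (rule sg_insert_right)
  have sw: "(-1) ^ card A = sg A {j} * sg {j} A" using sg_swap[OF fin(1) jA] by simp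
  show ?thesis unfolding C_def[symmetric] sw e1 e2 by (simp only: mult_ac)
qed

lemma s5:
  assumes "finite S" "j \<in> S" "A \<subseteq> S - {j}"
  shows "sg A (S - A) * sg {j} A =
    - (sg (insert j A) (S - insert j A) * (-1) ^ card (insert j A) * sg {j} (S - insert j A))"
proof -
  define C where "C = S - {j} - A"
  have fin: "finite A" "finite C" using assms finite_subset by (auto simp: C_def)
  have jA: "j \<notin> A" and jC: "j \<notin> C" and AC: "A \<inter> C = {}"
    and SA: "S - A = insert j C" and SC: "S - insert j A = C"
    using assms by (auto simp: C_def)
  have sw: "(-1) ^ card A = sg A {j} * sg {j} A" using sg_swap[OF fin(1) jA] by simp
  have ci: "(-1::real) ^ card (insert j A) = - ((-1) ^ card A)" using fin(1) jA by simp
  have e2: "sg A (insert j C) = sg A {j} * sg A C" using fin jC by (rule sg_insert_right)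
  have e4: "sg (insert j A) C = sg {j} C * sg A C" using fin jA by (rule sg_insert_left)
  show ?thesis unfolding SA SC ci sw e2 e4
    using sg_cases[of "{j}" C] by (elim disjE) (simp_all add: algebra_simps)
qed


definition wdg :: "(nat set \<Rightarrow> real) \<Rightarrow> (nat set \<Rightarrow> real) \<Rightarrow> nat set \<Rightarrow> real" where
  "wdg a b S = (\<Sum>A\<in>Pow S. sg A (S - A) * a A * b (S - A))"

definition ipr :: "nat set \<Rightarrow> (nat \<Rightarrow> real) \<Rightarrow> (nat set \<Rightarrow> real) \<Rightarrow> nat set \<Rightarrow> real" where
  "ipr D w a S = (\<Sum>j\<in>D - S. sg {j} S * w j * a (insert j S))"

definition hat :: "(nat set \<Rightarrow> real) \<Rightarrow> nat set \<Rightarrow> real" where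
  "hat a A = (-1) ^ card A * a A"

definition dd :: "(nat \<Rightarrow> nat set \<Rightarrow> real) \<Rightarrow> nat set \<Rightarrow> real" where
  "dd da B = (\<Sum>k\<in>B. sg {k} B * da k (B - {k}))"

lemma dw_pure:
  assumes fin: "finite S"
  shows "(\<Sum>k\<in>S. sg {k} S * (\<Sum>A\<in>Pow (S - {k}). sg A (S - {k} - A) *
            (da k A * b (S - {k} - A) + a A * db k (S - {k} - A))))
       = wdg (dd da) b S + wdg (hat a) (dd db) S"
proof -
  have R1: "wdg (dd da) b S = (\<Sum>k\<in>S. \<Sum>A\<in>Pow (S - {k}). sg {k} S * sg A (S - {k} - A) * da k A * b (S - {k} - A))"
  proof -
    have "wdg (dd da) b S = (\<Sum>B\<in>Pow S. \<Sum>k\<in>B. sg B (S - B) * sg {k} B * da k (B - {k}) * b (S - B))"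
      unfolding wdg_def dd_def by (simp add: sum_distrib_left sum_distrib_right mult_ac)
    also have "\<dots> = (\<Sum>k\<in>S. \<Sum>A\<in>Pow (S - {k}). sg (insert k A) (S - insert k A) * sg {k} (insert k A)
                         * da k (insert k A - {k}) * b (S - insert k A))"
      using fin by (rule swap_in)
    also have "\<dots> = (\<Sum>k\<in>S. \<Sum>A\<in>Pow (S - {k}). sg {k} S * sg A (S - {k} - A) * da k A * b (S - {k} - A))"
    proof (intro sum.cong refl)
      fix k A assume k: "k \<in> S" and A: "A \<in> Pow (S - {k})"
      have h1: "insert k A - {k} = A" and h2: "S - insert k A = S - {k} - A" using A by auto
      have s: "sg {k} S * sg A (S - {k} - A) = sg (insert k A) (S - insert k A) * sg {k} (insert k A)"
        using s1[OF fin k] A by auto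
      show "sg (insert k A) (S - insert k A) * sg {k} (insert k A) * da k (insert k A - {k}) * b (S - insert k A)
          = sg {k} S * sg A (S - {k} - A) * da k A * b (S - {k} - A)"
        by (simp only: h1 s) (simp only: h2)
    qed
    finally show ?thesis .
  qed
  have R2: "wdg (hat a) (dd db) S = (\<Sum>k\<in>S. \<Sum>A\<in>Pow (S - {k}). sg {k} S * sg A (S - {k} - A) * a A * db k (S - {k} - A))"
  proof -
    have "wdg (hat a) (dd db) S = (\<Sum>A\<in>Pow S. \<Sum>k\<in>S - A. sg A (S - A) * (-1) ^ card A * sg {k} (S - A) * a A * db k (S - A - {k}))"
      unfolding wdg_def dd_def hat_def by (simp add: sum_distrib_left sum_distrib_right mult_ac)
    also have "\<dots> = (\<Sum>k\<in>S. \<Sum>A\<in>Pow (S - {k}). sg A (S - A) * (-1) ^ card A * sg {k} (S - A) * a A * db k (S - A - {k}))"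
      using fin by (rule swap_out)
    also have "\<dots> = (\<Sum>k\<in>S. \<Sum>A\<in>Pow (S - {k}). sg {k} S * sg A (S - {k} - A) * a A * db k (S - {k} - A))"
    proof (intro sum.cong refl)
      fix k A assume k: "k \<in> S" and A: "A \<in> Pow (S - {k})"
      have h2: "S - A - {k} = S - {k} - A" by auto
      have s: "sg {k} S * sg A (S - {k} - A) = sg A (S - A) * (-1) ^ card A * sg {k} (S - A)"
        using s2[OF fin k] A by auto
      show "sg A (S - A) * (-1) ^ card A * sg {k} (S - A) * a A * db k (S - A - {k})
          = sg {k} S * sg A (S - {k} - A) * a A * db k (S - {k} - A)"
        by (simp only: h2 s)
    qed
    finally show ?thesis .
  qed
  show ?thesis unfolding R1 R2 sum.distrib[symmetric]
    by (intro sum.cong refl) (simp add: sum_distrib_left sum.distrib algebra_simps)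
qed

lemma iw_pure:
  assumes finD: "finite D" and SD: "S \<subseteq> D"
  shows "ipr D w (wdg a b) S = wdg (ipr D w a) b S + wdg (hat a) (ipr D w b) S"
proof -
  have fin: "finite S" using finD SD finite_subset by blast
  define T1 where "T1 A j = sg A (S - A) * sg {j} A * w j * a (insert j A) * b (S - A)" for A j
  define T2 where "T2 A j = sg A (S - A) * (-1) ^ card A * sg {j} (S - A) * w j * a A * b (insert j (S - A))" for A j
  have L: "ipr D w (wdg a b) S = (\<Sum>A\<in>Pow S. \<Sum>j\<in>D - S. T1 A j) + (\<Sum>A\<in>Pow S. \<Sum>j\<in>D - S. T2 A j)"
  proof -
    have "ipr D w (wdg a b) S = (\<Sum>j\<in>D - S. sg {j} S * w j *
        ((\<Sum>A\<in>Pow S. sg A (insert j S - A) * a A * b (insert j S - A)) +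
         (\<Sum>A\<in>Pow S. sg (insert j A) (insert j S - insert j A) * a (insert j A) * b (insert j S - insert j A))))"
      unfolding ipr_def wdg_def using fin by (intro sum.cong refl) (simp add: sum_pow_insert)
    also have "\<dots> = (\<Sum>j\<in>D - S. (\<Sum>A\<in>Pow S. T2 A j) + (\<Sum>A\<in>Pow S. T1 A j))"
    proof (intro sum.cong refl)
      fix j assume j: "j \<in> D - S"
      have a1: "sg {j} S * w j * (sg A (insert j S - A) * a A * b (insert j S - A)) = T2 A j"
        if A: "A \<in> Pow S" for A
      proof -
        have h: "insert j S - A = insert j (S - A)" using A j by auto
        show ?thesis unfolding h T2_def using s4[OF fin _ PowD[OF A]] j
          by (simp add: algebra_simps; metis mult.assoc mult.commute)
      qed
      have a2: "sg {j} S * w j * (sg (insert j A) (insert j S - insert j A) * a (insert j A) * b (insert j S - insert j A)) = T1 A j"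
        if A: "A \<in> Pow S" for A
      proof -
        have h: "insert j S - insert j A = S - A" using A j by auto
        show ?thesis unfolding h T1_def using s3[OF fin _ PowD[OF A]] j
          by (simp add: algebra_simps; metis mult.assoc mult.commute)
      qed
      show "sg {j} S * w j *
        ((\<Sum>A\<in>Pow S. sg A (insert j S - A) * a A * b (insert j S - A)) +
         (\<Sum>A\<in>Pow S. sg (insert j A) (insert j S - insert j A) * a (insert j A) * b (insert j S - insert j A)))
        = (\<Sum>A\<in>Pow S. T2 A j) + (\<Sum>A\<in>Pow S. T1 A j)"
        unfolding distrib_left sum_distrib_left using a1 a2 by simp
    qed
    also have "\<dots> = (\<Sum>A\<in>Pow S. \<Sum>j\<in>D - S. T1 A j) + (\<Sum>A\<in>Pow S. \<Sum>j\<in>D - S. T2 A j)"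
      by (simp add: sum.distrib sum.swap[of _ "D - S"])
    finally show ?thesis .
  qed
  have R1: "wdg (ipr D w a) b S = (\<Sum>A\<in>Pow S. \<Sum>j\<in>D - S. T1 A j) + (\<Sum>A\<in>Pow S. \<Sum>j\<in>S - A. T1 A j)"
  proof -
    have "wdg (ipr D w a) b S = (\<Sum>A\<in>Pow S. \<Sum>j\<in>D - A. T1 A j)"
      unfolding wdg_def ipr_def T1_def by (simp add: sum_distrib_left sum_distrib_right mult_ac)
    also have "\<dots> = (\<Sum>A\<in>Pow S. (\<Sum>j\<in>D - S. T1 A j) + (\<Sum>j\<in>S - A. T1 A j))"
    proof (intro sum.cong refl)
      fix A assume A: "A \<in> Pow S"
      have e: "D - A = (D - S) \<union> (S - A)" using A SD by auto
      show "(\<Sum>j\<in>D - A. T1 A j) = (\<Sum>j\<in>D - S. T1 A j) + (\<Sum>j\<in>S - A. T1 A j)"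
        unfolding e using finD fin by (subst sum.union_disjoint) auto
    qed
    finally show ?thesis by (simp add: sum.distrib)
  qed
  have R2: "wdg (hat a) (ipr D w b) S = (\<Sum>A\<in>Pow S. \<Sum>j\<in>D - S. T2 A j) + (\<Sum>A\<in>Pow S. \<Sum>j\<in>A. T2 A j)"
  proof -
    have "wdg (hat a) (ipr D w b) S = (\<Sum>A\<in>Pow S. \<Sum>j\<in>D - (S - A). T2 A j)"
      unfolding wdg_def ipr_def T2_def hat_def by (simp add: sum_distrib_left sum_distrib_right mult_ac)
    also have "\<dots> = (\<Sum>A\<in>Pow S. (\<Sum>j\<in>D - S. T2 A j) + (\<Sum>j\<in>A. T2 A j))"
    proof (intro sum.cong refl)
      fix A assume A: "A \<in> Pow S"
      have e: "D - (S - A) = (D - S) \<union> A" using A SD by auto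
      have "finite A" using A fin finite_subset by auto
      thus "(\<Sum>j\<in>D - (S - A). T2 A j) = (\<Sum>j\<in>D - S. T2 A j) + (\<Sum>j\<in>A. T2 A j)"
        unfolding e using finD A by (subst sum.union_disjoint) auto
    qed
    finally show ?thesis by (simp add: sum.distrib)
  qed
  have Z: "(\<Sum>A\<in>Pow S. \<Sum>j\<in>S - A. T1 A j) + (\<Sum>A\<in>Pow S. \<Sum>j\<in>A. T2 A j) = 0"
  proof -
    have "(\<Sum>A\<in>Pow S. \<Sum>j\<in>S - A. T1 A j) = (\<Sum>j\<in>S. \<Sum>A\<in>Pow (S - {j}). T1 A j)"
      using fin by (rule swap_out)
    moreover have "(\<Sum>A\<in>Pow S. \<Sum>j\<in>A. T2 A j) = (\<Sum>j\<in>S. \<Sum>A\<in>Pow (S - {j}). T2 (insert j A) j)"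
      using fin by (rule swap_in)
    moreover have "T1 A j = - T2 (insert j A) j" if j: "j \<in> S" and A: "A \<in> Pow (S - {j})" for A j
    proof -
      have h: "insert j (S - insert j A) = S - A" using j A by auto
      show ?thesis unfolding T1_def T2_def h using s5[OF fin j] A
        by (simp add: algebra_simps; metis mult.assoc mult.commute)
    qed
    ultimately show ?thesis by (simp add: sum.distrib[symmetric] sum_negf)
  qed
  show ?thesis unfolding L R1 R2 using Z by simp
qed


definition LieP :: "nat set \<Rightarrow> (nat \<Rightarrow> real) \<Rightarrow> (nat \<Rightarrow> nat \<Rightarrow> real) \<Rightarrow> (nat set \<Rightarrow> real)
    \<Rightarrow> (nat \<Rightarrow> nat set \<Rightarrow> real) \<Rightarrow> nat set \<Rightarrow> real" where
  "LieP D w dw a da S = dd (\<lambda>k A. ipr D (dw k) a A + ipr D w (da k) A) S + ipr D w (dd da) S"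

lemma wdg_cong:
  "(\<And>A. A \<subseteq> S \<Longrightarrow> a A = a' A) \<Longrightarrow> (\<And>A. A \<subseteq> S \<Longrightarrow> b A = b' A) \<Longrightarrow> wdg a b S = wdg a' b' S"
  unfolding wdg_def by (intro sum.cong refl) auto

lemma wdg_add_left: "wdg (\<lambda>A. a1 A + a2 A) b S = wdg a1 b S + wdg a2 b S"
  unfolding wdg_def by (simp add: algebra_simps sum.distrib)

lemma wdg_add_right: "wdg a (\<lambda>A. b1 A + b2 A) S = wdg a b1 S + wdg a b2 S"
  unfolding wdg_def by (simp add: algebra_simps sum.distrib)

lemma wdg_neg_left: "wdg (\<lambda>A. - a A) b S = - wdg a b S"
  unfolding wdg_def by (simp add: sum_negf)

lemma wdg_zero_left: "wdg (\<lambda>A. 0) b S = 0"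
  unfolding wdg_def by simp

lemma wdg_zero_right: "wdg a (\<lambda>A. 0) S = 0"
  unfolding wdg_def by simp

lemma wdg_cmult_left: "wdg (\<lambda>A. c * a A) b S = c * wdg a b S"
  unfolding wdg_def by (simp add: sum_distrib_left algebra_simps)

lemma wdg_cmult_right: "wdg a (\<lambda>A. c * b A) S = c * wdg a b S"
  unfolding wdg_def by (simp add: sum_distrib_left algebra_simps)

lemma ipr_cong:
  "(\<And>j. j \<in> D - S \<Longrightarrow> a (insert j S) = a' (insert j S)) \<Longrightarrow> ipr D w a S = ipr D w a' S"
  unfolding ipr_def by (intro sum.cong refl) auto

lemma ipr_add: "ipr D w (\<lambda>B. a1 B + a2 B) S = ipr D w a1 S + ipr D w a2 S"
  unfolding ipr_def by (simp add: algebra_simps sum.distrib)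

lemma ipr_cmult: "ipr D w (\<lambda>B. c * a B) S = c * ipr D w a S"
  unfolding ipr_def by (simp add: sum_distrib_left algebra_simps)

lemma dd_cong:
  "(\<And>k. k \<in> S \<Longrightarrow> f k (S - {k}) = g k (S - {k})) \<Longrightarrow> dd f S = dd g S"
  unfolding dd_def by (intro sum.cong refl) auto

lemma dd_add: "dd (\<lambda>k A. f k A + g k A) S = dd f S + dd g S"
  unfolding dd_def by (simp add: algebra_simps sum.distrib)

lemma dd_cmult: "dd (\<lambda>k A. c * f k A) S = c * dd f S"
  unfolding dd_def by (simp add: sum_distrib_left algebra_simps)

lemma hat_hat: "hat (hat a) = a"
  unfolding hat_def by (simp add: fun_eq_iff flip: power_add)

lemma dd_hat:
  assumes "finite B"
  shows "dd (\<lambda>k. hat (f k)) B = - hat (dd f) B"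
proof -
  have "dd (\<lambda>k. hat (f k)) B = (\<Sum>k\<in>B. - ((-1) ^ card B * (sg {k} B * f k (B - {k}))))"
    unfolding dd_def hat_def
  proof (intro sum.cong refl)
    fix k assume k: "k \<in> B"
    have "card B = Suc (card (B - {k}))" using assms k by (metis card_Suc_Diff1)
    hence "(-1::real) ^ card B = - ((-1) ^ card (B - {k}))" by simp
    thus "sg {k} B * ((-1) ^ card (B - {k}) * f k (B - {k})) = - ((-1) ^ card B * (sg {k} B * f k (B - {k})))"
      by simp
  qed
  thus ?thesis by (simp add: hat_def dd_def sum_distrib_left sum_negf)
qed

lemma hat_ipr:
  assumes "finite B"
  shows "hat (ipr D w a) B = - ipr D w (hat a) B"
proof -
  have "ipr D w (hat a) B = (\<Sum>j\<in>D - B. - ((-1) ^ card B * (sg {j} B * w j * a (insert j B))))"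
    unfolding ipr_def hat_def using assms by (intro sum.cong refl) auto
  thus ?thesis by (simp add: hat_def ipr_def sum_distrib_left sum_negf)
qed

lemma dd_wdg:
  assumes "finite S"
  shows "dd (\<lambda>k B. wdg (da k) b B + wdg a (db k) B) S = wdg (dd da) b S + wdg (hat a) (dd db) S"
proof -
  have "dd (\<lambda>k B. wdg (da k) b B + wdg a (db k) B) S = (\<Sum>k\<in>S. sg {k} S * (\<Sum>A\<in>Pow (S - {k}). sg A (S - {k} - A) *
            (da k A * b (S - {k} - A) + a A * db k (S - {k} - A))))"
    unfolding dd_def wdg_def by (intro sum.cong refl) (simp add: sum_distrib_left sum.distrib algebra_simps)
  also have "\<dots> = wdg (dd da) b S + wdg (hat a) (dd db) S" by (rule dw_pure[OF assms])
  finally show ?thesis .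
qed

lemma lie_wdg_pure:
  assumes finD: "finite D" and SD: "S \<subseteq> D"
  shows "LieP D w dw (wdg a b) (\<lambda>k B. wdg (da k) b B + wdg a (db k) B) S
       = wdg (LieP D w dw a da) b S + wdg a (LieP D w dw b db) S"
proof -
  have fin: "finite S" using finD SD finite_subset by blast
  define X where "X k B = ipr D (dw k) a B + ipr D w (da k) B" for k B
  define Y where "Y k B = ipr D (dw k) b B + ipr D w (db k) B" for k B
  have step1: "dd (\<lambda>k A. ipr D (dw k) (wdg a b) A + ipr D w (\<lambda>B. wdg (da k) b B + wdg a (db k) B) A) S
     = (wdg (dd X) b S + wdg a (dd Y) S) + (wdg (dd (\<lambda>k. hat (da k))) (ipr D w b) S + wdg (hat (ipr D w a)) (dd db) S)"
  proof -
    have "dd (\<lambda>k A. ipr D (dw k) (wdg a b) A + ipr D w (\<lambda>B. wdg (da k) b B + wdg a (db k) B) A) S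
       = dd (\<lambda>k A. (wdg (X k) b A + wdg (hat a) (Y k) A) + (wdg (hat (da k)) (ipr D w b) A + wdg (ipr D w a) (db k) A)) S"
    proof (rule dd_cong)
      fix k assume k: "k \<in> S"
      have AD: "S - {k} \<subseteq> D" using SD by auto
      show "ipr D (dw k) (wdg a b) (S - {k}) + ipr D w (\<lambda>B. wdg (da k) b B + wdg a (db k) B) (S - {k})
        = (wdg (X k) b (S - {k}) + wdg (hat a) (Y k) (S - {k})) + (wdg (hat (da k)) (ipr D w b) (S - {k}) + wdg (ipr D w a) (db k) (S - {k}))"
        unfolding ipr_add iw_pure[OF finD AD] X_def Y_def wdg_add_left wdg_add_right by simp
    qed
    also have "\<dots> = dd (\<lambda>k A. wdg (X k) b A + wdg (hat a) (Y k) A) S + dd (\<lambda>k A. wdg (hat (da k)) (ipr D w b) A + wdg (ipr D w a) (db k) A) S"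
      by (rule dd_add)
    also have "\<dots> = (wdg (dd X) b S + wdg (hat (hat a)) (dd Y) S) + (wdg (dd (\<lambda>k. hat (da k))) (ipr D w b) S + wdg (hat (ipr D w a)) (dd db) S)"
      by (simp only: dd_wdg[OF fin])
    finally show ?thesis unfolding hat_hat .
  qed
  have step2: "ipr D w (dd (\<lambda>k B. wdg (da k) b B + wdg a (db k) B)) S
     = wdg (ipr D w (dd da)) b S + wdg (hat (dd da)) (ipr D w b) S + (wdg (ipr D w (hat a)) (dd db) S + wdg a (ipr D w (dd db)) S)"
  proof -
    have "ipr D w (dd (\<lambda>k B. wdg (da k) b B + wdg a (db k) B)) S = ipr D w (\<lambda>B. wdg (dd da) b B + wdg (hat a) (dd db) B) S"
      using fin by (intro ipr_cong dd_wdg) simp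
    also have "\<dots> = wdg (ipr D w (dd da)) b S + wdg (hat (dd da)) (ipr D w b) S + (wdg (ipr D w (hat a)) (dd db) S + wdg (hat (hat a)) (ipr D w (dd db)) S)"
      unfolding ipr_add iw_pure[OF finD SD] ..
    finally show ?thesis unfolding hat_hat .
  qed
  have c1: "wdg (dd (\<lambda>k. hat (da k))) (ipr D w b) S = - wdg (hat (dd da)) (ipr D w b) S"
  proof -
    have "wdg (dd (\<lambda>k. hat (da k))) (ipr D w b) S = wdg (\<lambda>B. - hat (dd da) B) (ipr D w b) S"
      using fin by (intro wdg_cong dd_hat refl) (rule finite_subset)
    thus ?thesis by (simp add: wdg_neg_left)
  qed
  have c2: "wdg (hat (ipr D w a)) (dd db) S = - wdg (ipr D w (hat a)) (dd db) S"
  proof -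
    have "wdg (hat (ipr D w a)) (dd db) S = wdg (\<lambda>B. - ipr D w (hat a) B) (dd db) S"
      using fin by (intro wdg_cong hat_ipr refl) (rule finite_subset)
    thus ?thesis by (simp add: wdg_neg_left)
  qed
  have rhs: "wdg (LieP D w dw a da) b S + wdg a (LieP D w dw b db) S
     = wdg (dd X) b S + wdg (ipr D w (dd da)) b S + (wdg a (dd Y) S + wdg a (ipr D w (dd db)) S)"
  proof -
    have "LieP D w dw a da = (\<lambda>B. dd X B + ipr D w (dd da) B)"
      unfolding LieP_def X_def by (rule ext) (rule refl)
    moreover have "LieP D w dw b db = (\<lambda>B. dd Y B + ipr D w (dd db) B)"
      unfolding LieP_def Y_def by (rule ext) (rule refl)
    ultimately show ?thesis by (simp add: wdg_add_left wdg_add_right)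
  qed
  show ?thesis unfolding rhs
    unfolding LieP_def step1 step2 c1 c2 by simp
qed

lemma LieP_add:
  "LieP D w dw (\<lambda>A. a1 A + a2 A) (\<lambda>k A. da1 k A + da2 k A) S = LieP D w dw a1 da1 S + LieP D w dw a2 da2 S"
  unfolding LieP_def ipr_add dd_add by (simp add: ipr_def dd_def sum.distrib algebra_simps)

lemma LieP_cmult:
  "LieP D w dw (\<lambda>A. c * a A) (\<lambda>k A. c * da k A) S = c * LieP D w dw a da S"
  unfolding LieP_def by (simp add: ipr_def dd_def sum_distrib_left algebra_simps)


context fixes idx :: "nat \<Rightarrow> 'n::finite" begin

definition regx :: "real set \<Rightarrow> 'n tform \<Rightarrow> bool" where
  "regx T \<Theta> \<longleftrightarrow> (\<forall>t\<in>T. \<forall>x A k. dxk idx k (\<lambda>t' x'. \<Theta> t' x' A) t x)"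

definition regt :: "real set \<Rightarrow> 'n tform \<Rightarrow> bool" where
  "regt T \<Theta> \<longleftrightarrow> (\<forall>t\<in>T. \<forall>x A. dtt (\<lambda>t' x'. \<Theta> t' x' A) t x)"

lemma wedge_eq: "wedge \<alpha> \<beta> t x S = wdg (\<alpha> t x) (\<beta> t x) S"
  unfolding wedge_def wdg_def sg_def invc_def ..

lemma iprod_eq: "finite S \<Longrightarrow> iprod idx u \<Theta> t x S = ipr {1..CARD('n)} (\<lambda>j. ucomp idx u j t x) (\<Theta> t x) S"
  unfolding iprod_def ipr_def by (intro sum.cong refl) (simp add: card_less_sg)

lemma dform_eq: "finite S \<Longrightarrow> dform idx \<Theta> t x S = dd (\<lambda>k A. pdx idx k (\<lambda>t' x'. \<Theta> t' x' A) t x) S"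
  unfolding dform_def dd_def by (intro sum.cong refl) (simp add: card_less_sg)

lemma pdx_cmm:
  assumes "dxk idx k f t x" "dxk idx k g t x"
  shows "pdx idx k (\<lambda>t x. c * f t x * g t x) t x = c * (pdx idx k f t x * g t x + f t x * pdx idx k g t x)"
    and "dxk idx k (\<lambda>t x. c * f t x * g t x) t x"
proof -
  have m: "pdx idx k (\<lambda>t x. f t x * g t x) t x = pdx idx k f t x * g t x + f t x * pdx idx k g t x"
    "dxk idx k (\<lambda>t x. f t x * g t x) t x" using pdx_mult[OF assms] by auto
  show "pdx idx k (\<lambda>t x. c * f t x * g t x) t x = c * (pdx idx k f t x * g t x + f t x * pdx idx k g t x)"
    using pdx_cmult[OF m(2), of c] m(1) by (simp add: mult.assoc)
  show "dxk idx k (\<lambda>t x. c * f t x * g t x) t x"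
    using pdx_cmult(2)[OF m(2), of c] by (simp add: mult.assoc)
qed

lemma pdt_cmm:
  assumes "dtt f t x" "dtt g t x"
  shows "pdt (\<lambda>t x. c * f t x * g t x) t x = c * (pdt f t x * g t x + f t x * pdt g t x)"
    and "dtt (\<lambda>t x. c * f t x * g t x) t x"
proof -
  have m: "pdt (\<lambda>t x. f t x * g t x) t x = pdt f t x * g t x + f t x * pdt g t x"
    "dtt (\<lambda>t x. f t x * g t x) t x" using pdt_mult[OF assms] by auto
  show "pdt (\<lambda>t x. c * f t x * g t x) t x = c * (pdt f t x * g t x + f t x * pdt g t x)"
    using pdt_cmult[OF m(2), of c] m(1) by (simp add: mult.assoc)
  show "dtt (\<lambda>t x. c * f t x * g t x) t x"
    using pdt_cmult(2)[OF m(2), of c] by (simp add: mult.assoc)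
qed

lemma wedge_infinite: "infinite A \<Longrightarrow> wedge \<alpha> \<beta> t x A = 0"
  unfolding wedge_def by simp

lemma pdx_wedge:
  assumes a: "\<And>A. dxk idx k (\<lambda>t' x'. \<alpha> t' x' A) t x" and b: "\<And>A. dxk idx k (\<lambda>t' x'. \<beta> t' x' A) t x"
  shows "pdx idx k (\<lambda>t' x'. wedge \<alpha> \<beta> t' x' A) t x
      = wdg (\<lambda>B. pdx idx k (\<lambda>t' x'. \<alpha> t' x' B) t x) (\<beta> t x) A + wdg (\<alpha> t x) (\<lambda>B. pdx idx k (\<lambda>t' x'. \<beta> t' x' B) t x) A"
    and "dxk idx k (\<lambda>t' x'. wedge \<alpha> \<beta> t' x' A) t x"
proof -
  show "pdx idx k (\<lambda>t' x'. wedge \<alpha> \<beta> t' x' A) t x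
      = wdg (\<lambda>B. pdx idx k (\<lambda>t' x'. \<alpha> t' x' B) t x) (\<beta> t x) A + wdg (\<alpha> t x) (\<lambda>B. pdx idx k (\<lambda>t' x'. \<beta> t' x' B) t x) A"
  proof -
    let ?c = "\<lambda>B. (-1::real) ^ card {(a, b). a \<in> B \<and> b \<in> A - B \<and> b < a}"
    have "pdx idx k (\<lambda>t' x'. wedge \<alpha> \<beta> t' x' A) t x = (\<Sum>B\<in>Pow A. pdx idx k (\<lambda>t' x'. ?c B * \<alpha> t' x' B * \<beta> t' x' (A - B)) t x)"
      unfolding wedge_def by (rule pdx_sum(1)) (rule pdx_cmm(2)[OF a b])
    also have "\<dots> = (\<Sum>B\<in>Pow A. ?c B * (pdx idx k (\<lambda>t' x'. \<alpha> t' x' B) t x * \<beta> t x (A - B) + \<alpha> t x B * pdx idx k (\<lambda>t' x'. \<beta> t' x' (A - B)) t x))"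
      by (intro sum.cong refl pdx_cmm(1)[OF a b])
    finally show ?thesis unfolding wdg_def sg_def invc_def by (simp add: sum.distrib algebra_simps)
  qed
  show "dxk idx k (\<lambda>t' x'. wedge \<alpha> \<beta> t' x' A) t x"
    unfolding wedge_def by (intro pdx_sum(2) pdx_cmm(2) a b)
qed

lemma pdt_wedge:
  assumes a: "\<And>A. dtt (\<lambda>t' x'. \<alpha> t' x' A) t x" and b: "\<And>A. dtt (\<lambda>t' x'. \<beta> t' x' A) t x"
  shows "pdt (\<lambda>t' x'. wedge \<alpha> \<beta> t' x' A) t x
      = wdg (\<lambda>B. pdt (\<lambda>t' x'. \<alpha> t' x' B) t x) (\<beta> t x) A + wdg (\<alpha> t x) (\<lambda>B. pdt (\<lambda>t' x'. \<beta> t' x' B) t x) A"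
    and "dtt (\<lambda>t' x'. wedge \<alpha> \<beta> t' x' A) t x"
proof -
  show "pdt (\<lambda>t' x'. wedge \<alpha> \<beta> t' x' A) t x
      = wdg (\<lambda>B. pdt (\<lambda>t' x'. \<alpha> t' x' B) t x) (\<beta> t x) A + wdg (\<alpha> t x) (\<lambda>B. pdt (\<lambda>t' x'. \<beta> t' x' B) t x) A"
  proof -
    let ?c = "\<lambda>B. (-1::real) ^ card {(a, b). a \<in> B \<and> b \<in> A - B \<and> b < a}"
    have "pdt (\<lambda>t' x'. wedge \<alpha> \<beta> t' x' A) t x = (\<Sum>B\<in>Pow A. pdt (\<lambda>t' x'. ?c B * \<alpha> t' x' B * \<beta> t' x' (A - B)) t x)"
      unfolding wedge_def by (rule pdt_sum(1)) (rule pdt_cmm(2)[OF a b])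
    also have "\<dots> = (\<Sum>B\<in>Pow A. ?c B * (pdt (\<lambda>t' x'. \<alpha> t' x' B) t x * \<beta> t x (A - B) + \<alpha> t x B * pdt (\<lambda>t' x'. \<beta> t' x' (A - B)) t x))"
      by (intro sum.cong refl pdt_cmm(1)[OF a b])
    finally show ?thesis unfolding wdg_def sg_def invc_def by (simp add: sum.distrib algebra_simps)
  qed
  show "dtt (\<lambda>t' x'. wedge \<alpha> \<beta> t' x' A) t x"
    unfolding wedge_def by (intro pdt_sum(2) pdt_cmm(2) a b)
qed

end


lemma LieP_cong:
  assumes "finite S" "\<And>k A. finite A \<Longrightarrow> da k A = da' k A"
  shows "LieP D w dw a da S = LieP D w dw a da' S"
proof -
  have 1: "dd (\<lambda>k A. ipr D (dw k) a A + ipr D w (da k) A) S = dd (\<lambda>k A. ipr D (dw k) a A + ipr D w (da' k) A) S"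
  proof (rule dd_cong)
    fix k assume "k \<in> S"
    have "ipr D w (da k) (S - {k}) = ipr D w (da' k) (S - {k})"
      by (rule ipr_cong) (use assms in auto)
    thus "ipr D (dw k) a (S - {k}) + ipr D w (da k) (S - {k}) = ipr D (dw k) a (S - {k}) + ipr D w (da' k) (S - {k})"
      by simp
  qed
  have 2: "ipr D w (dd da) S = ipr D w (dd da') S"
  proof (rule ipr_cong)
    fix j assume "j \<in> D - S"
    show "dd da (insert j S) = dd da' (insert j S)"
      by (rule dd_cong) (use assms in auto)
  qed
  show ?thesis unfolding LieP_def 1 2 ..
qed

context fixes idx :: "nat \<Rightarrow> 'n::finite" begin

lemma lie_eq:
  assumes d\<Theta>: "\<And>A k. dxk idx k (\<lambda>t' x'. \<Theta> t' x' A) t x"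
    and du: "\<And>j k. dxk idx k (ucomp idx u j) t x" and fin: "finite S"
  shows "lie idx u \<Theta> t x S = LieP {1..CARD('n)} (\<lambda>j. ucomp idx u j t x) (\<lambda>k j. pdx idx k (ucomp idx u j) t x)
            (\<Theta> t x) (\<lambda>k A. pdx idx k (\<lambda>t' x'. \<Theta> t' x' A) t x) S"
proof -
  let ?D = "{1..CARD('n)}"
  have 1: "dform idx (iprod idx u \<Theta>) t x S = dd (\<lambda>k A. ipr ?D (\<lambda>j. pdx idx k (ucomp idx u j) t x) (\<Theta> t x) A
      + ipr ?D (\<lambda>j. ucomp idx u j t x) (\<lambda>A. pdx idx k (\<lambda>t' x'. \<Theta> t' x' A) t x) A) S"
    unfolding dform_eq[OF fin]
  proof (rule dd_cong)
    fix k assume "k \<in> S"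
    define A where "A = S - {k}"
    have finA: "finite A" using fin by (simp add: A_def)
    let ?c = "\<lambda>j. (-1::real) ^ card {s \<in> A. s < j}"
    have "pdx idx k (\<lambda>t' x'. iprod idx u \<Theta> t' x' A) t x
       = (\<Sum>j\<in>?D - A. pdx idx k (\<lambda>t' x'. ?c j * ucomp idx u j t' x' * \<Theta> t' x' (insert j A)) t x)"
      unfolding iprod_def by (rule pdx_sum(1)) (rule pdx_cmm(2)[OF du d\<Theta>])
    also have "\<dots> = (\<Sum>j\<in>?D - A. ?c j * (pdx idx k (ucomp idx u j) t x * \<Theta> t x (insert j A)
          + ucomp idx u j t x * pdx idx k (\<lambda>t' x'. \<Theta> t' x' (insert j A)) t x))"
      by (intro sum.cong refl pdx_cmm(1)[OF du d\<Theta>])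
    also have "\<dots> = ipr ?D (\<lambda>j. pdx idx k (ucomp idx u j) t x) (\<Theta> t x) A
      + ipr ?D (\<lambda>j. ucomp idx u j t x) (\<lambda>A. pdx idx k (\<lambda>t' x'. \<Theta> t' x' A) t x) A"
      unfolding ipr_def card_less_sg[OF finA] by (simp add: sum.distrib algebra_simps)
    finally show "pdx idx k (\<lambda>t' x'. iprod idx u \<Theta> t' x' (S - {k})) t x = ipr ?D (\<lambda>j. pdx idx k (ucomp idx u j) t x) (\<Theta> t x) (S - {k})
      + ipr ?D (\<lambda>j. ucomp idx u j t x) (\<lambda>A. pdx idx k (\<lambda>t' x'. \<Theta> t' x' A) t x) (S - {k})"
      unfolding A_def .
  qed
  have 2: "iprod idx u (dform idx \<Theta>) t x S = ipr ?D (\<lambda>j. ucomp idx u j t x) (dd (\<lambda>k A. pdx idx k (\<lambda>t' x'. \<Theta> t' x' A) t x)) S"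
    unfolding iprod_eq[OF fin] using fin by (intro ipr_cong dform_eq) simp
  show ?thesis unfolding lie_def 1 2 LieP_def ..
qed

lemma lie_eq_inv:
  assumes "\<forall>t\<in>T. \<forall>x j k. dxk idx k (ucomp idx u j) t x" "regx idx T \<Theta>" "t \<in> T" "finite S"
  shows "lie idx u \<Theta> t x S = LieP {1..CARD('n)} (\<lambda>j. ucomp idx u j t x) (\<lambda>k j. pdx idx k (ucomp idx u j) t x)
            (\<Theta> t x) (\<lambda>k A. pdx idx k (\<lambda>t' x'. \<Theta> t' x' A) t x) S"
  using assms by (intro lie_eq) (auto simp: regx_def)

lemma wedge_reg:
  assumes "regx idx T \<alpha>" "regt T \<alpha>" "regx idx T \<beta>" "regt T \<beta>"
  shows "regx idx T (wedge \<alpha> \<beta>)" "regt T (wedge \<alpha> \<beta>)"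
  using assms unfolding regx_def regt_def by (auto intro!: pdx_wedge(2) pdt_wedge(2))

lemma wedge_inv:
  assumes du: "\<forall>t\<in>T. \<forall>x j k. dxk idx k (ucomp idx u j) t x"
    and ra: "regx idx T \<alpha>" "regt T \<alpha>" and rb: "regx idx T \<beta>" "regt T \<beta>"
    and ia: "lie_invariant idx T u \<alpha>" and ib: "lie_invariant idx T u \<beta>"
  shows "lie_invariant idx T u (wedge \<alpha> \<beta>)"
  unfolding lie_invariant_def
proof (intro ballI allI impI)
  fix t x S assume t: "t \<in> T" and SD: "S \<subseteq> {1..CARD('n)}"
  let ?D = "{1..CARD('n)}"
  have fin: "finite S" using SD finite_subset by blast
  let ?w = "\<lambda>j. ucomp idx u j t x" and ?dw = "\<lambda>k j. pdx idx k (ucomp idx u j) t x"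
  let ?a = "\<alpha> t x" and ?b = "\<beta> t x"
  let ?da = "\<lambda>k A. pdx idx k (\<lambda>t' x'. \<alpha> t' x' A) t x" and ?db = "\<lambda>k A. pdx idx k (\<lambda>t' x'. \<beta> t' x' A) t x"
  have dxa: "\<And>A k. dxk idx k (\<lambda>t' x'. \<alpha> t' x' A) t x" using ra t by (auto simp: regx_def)
  have dxb: "\<And>A k. dxk idx k (\<lambda>t' x'. \<beta> t' x' A) t x" using rb t by (auto simp: regx_def)
  have dta: "\<And>A. dtt (\<lambda>t' x'. \<alpha> t' x' A) t x" using ra t by (auto simp: regt_def)
  have dtb: "\<And>A. dtt (\<lambda>t' x'. \<beta> t' x' A) t x" using rb t by (auto simp: regt_def)
  have rw: "regx idx T (wedge \<alpha> \<beta>)" using wedge_reg ra rb by blast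
  have "lie idx u (wedge \<alpha> \<beta>) t x S = LieP ?D ?w ?dw (wedge \<alpha> \<beta> t x) (\<lambda>k A. pdx idx k (\<lambda>t' x'. wedge \<alpha> \<beta> t' x' A) t x) S"
    by (rule lie_eq_inv[OF du rw t fin])
  also have "\<dots> = LieP ?D ?w ?dw (wdg ?a ?b) (\<lambda>k B. wdg (?da k) ?b B + wdg ?a (?db k) B) S"
  proof -
    have e: "wedge \<alpha> \<beta> t x = wdg ?a ?b" by (rule ext) (rule wedge_eq)
    show ?thesis unfolding e by (rule LieP_cong[OF fin]) (rule pdx_wedge(1)[OF dxa dxb])
  qed
  also have "\<dots> = wdg (LieP ?D ?w ?dw ?a ?da) ?b S + wdg ?a (LieP ?D ?w ?dw ?b ?db) S"
    by (rule lie_wdg_pure) (use SD in auto)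
  also have "\<dots> = wdg (\<lambda>A. lie idx u \<alpha> t x A) ?b S + wdg ?a (\<lambda>A. lie idx u \<beta> t x A) S"
    using fin by (intro arg_cong2[where f="(+)"] wdg_cong refl lie_eq_inv[OF du _ t, symmetric] ra(1) rb(1))
      (auto intro: finite_subset)
  finally have L: "lie idx u (wedge \<alpha> \<beta>) t x S = wdg (\<lambda>A. lie idx u \<alpha> t x A) ?b S + wdg ?a (\<lambda>A. lie idx u \<beta> t x A) S" .
  have P: "pdt (\<lambda>t' x'. wedge \<alpha> \<beta> t' x' S) t x = wdg (\<lambda>B. pdt (\<lambda>t' x'. \<alpha> t' x' B) t x) ?b S + wdg ?a (\<lambda>B. pdt (\<lambda>t' x'. \<beta> t' x' B) t x) S"
    by (rule pdt_wedge(1)[OF dta dtb])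
  have "pdt (\<lambda>t' x'. wedge \<alpha> \<beta> t' x' S) t x + lie idx u (wedge \<alpha> \<beta>) t x S
     = wdg (\<lambda>B. pdt (\<lambda>t' x'. \<alpha> t' x' B) t x + lie idx u \<alpha> t x B) ?b S + wdg ?a (\<lambda>B. pdt (\<lambda>t' x'. \<beta> t' x' B) t x + lie idx u \<beta> t x B) S"
    unfolding P L wdg_add_left wdg_add_right by simp
  also have "\<dots> = wdg (\<lambda>B. 0) ?b S + wdg ?a (\<lambda>B. 0) S"
    using ia ib t SD unfolding lie_invariant_def
    by (intro arg_cong2[where f="(+)"] wdg_cong refl) auto
  finally show "pdt (\<lambda>t' x'. wedge \<alpha> \<beta> t' x' S) t x + lie idx u (wedge \<alpha> \<beta>) t x S = 0"
    by (simp add: wdg_zero_left wdg_zero_right)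
qed

lemma scale_reg:
  assumes "regx idx T \<Theta>" "regt T \<Theta>"
  shows "regx idx T (\<lambda>t x S. c * \<Theta> t x S)" "regt T (\<lambda>t x S. c * \<Theta> t x S)"
  using assms unfolding regx_def regt_def by (auto intro!: pdx_cmult(2) pdt_cmult(2))

lemma add_reg:
  assumes "regx idx T \<Theta>1" "regt T \<Theta>1" "regx idx T \<Theta>2" "regt T \<Theta>2"
  shows "regx idx T (\<lambda>t x S. \<Theta>1 t x S + \<Theta>2 t x S)" "regt T (\<lambda>t x S. \<Theta>1 t x S + \<Theta>2 t x S)"
  using assms unfolding regx_def regt_def by (auto intro!: pdx_add(2) pdt_add(2))

lemma scale_inv:
  assumes du: "\<forall>t\<in>T. \<forall>x j k. dxk idx k (ucomp idx u j) t x"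
    and r: "regx idx T \<Theta>" "regt T \<Theta>" and i: "lie_invariant idx T u \<Theta>"
  shows "lie_invariant idx T u (\<lambda>t x S. c * \<Theta> t x S)"
  unfolding lie_invariant_def
proof (intro ballI allI impI)
  fix t x S assume t: "t \<in> T" and SD: "S \<subseteq> {1..CARD('n)}"
  have fin: "finite S" using SD finite_subset by blast
  have dx: "\<And>A k. dxk idx k (\<lambda>t' x'. \<Theta> t' x' A) t x" using r t by (auto simp: regx_def)
  have dt: "\<And>A. dtt (\<lambda>t' x'. \<Theta> t' x' A) t x" using r t by (auto simp: regt_def)
  have "lie idx u (\<lambda>t x S. c * \<Theta> t x S) t x S = c * lie idx u \<Theta> t x S"
    unfolding lie_eq_inv[OF du scale_reg(1)[OF r] t fin] lie_eq_inv[OF du r(1) t fin]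
    by (subst LieP_cong[OF fin, where da'="\<lambda>k A. c * pdx idx k (\<lambda>t' x'. \<Theta> t' x' A) t x"])
       (auto simp: pdx_cmult(1)[OF dx] LieP_cmult)
  moreover have "pdt (\<lambda>t' x'. c * \<Theta> t' x' S) t x = c * pdt (\<lambda>t' x'. \<Theta> t' x' S) t x"
    by (rule pdt_cmult(1)[OF dt])
  ultimately show "pdt (\<lambda>t' x'. c * \<Theta> t' x' S) t x + lie idx u (\<lambda>t x S. c * \<Theta> t x S) t x S = 0"
    using i t SD unfolding lie_invariant_def by (simp flip: distrib_left)
qed

lemma add_inv:
  assumes du: "\<forall>t\<in>T. \<forall>x j k. dxk idx k (ucomp idx u j) t x"
    and r1: "regx idx T \<Theta>1" "regt T \<Theta>1" and i1: "lie_invariant idx T u \<Theta>1"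
    and r2: "regx idx T \<Theta>2" "regt T \<Theta>2" and i2: "lie_invariant idx T u \<Theta>2"
  shows "lie_invariant idx T u (\<lambda>t x S. \<Theta>1 t x S + \<Theta>2 t x S)"
  unfolding lie_invariant_def
proof (intro ballI allI impI)
  fix t x S assume t: "t \<in> T" and SD: "S \<subseteq> {1..CARD('n)}"
  have fin: "finite S" using SD finite_subset by blast
  have dx1: "\<And>A k. dxk idx k (\<lambda>t' x'. \<Theta>1 t' x' A) t x" using r1 t by (auto simp: regx_def)
  have dt1: "\<And>A. dtt (\<lambda>t' x'. \<Theta>1 t' x' A) t x" using r1 t by (auto simp: regt_def)
  have dx2: "\<And>A k. dxk idx k (\<lambda>t' x'. \<Theta>2 t' x' A) t x" using r2 t by (auto simp: regx_def)
  have dt2: "\<And>A. dtt (\<lambda>t' x'. \<Theta>2 t' x' A) t x" using r2 t by (auto simp: regt_def)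
  have L: "lie idx u (\<lambda>t x S. \<Theta>1 t x S + \<Theta>2 t x S) t x S = lie idx u \<Theta>1 t x S + lie idx u \<Theta>2 t x S"
    unfolding lie_eq_inv[OF du add_reg(1)[OF r1 r2] t fin] lie_eq_inv[OF du r1(1) t fin] lie_eq_inv[OF du r2(1) t fin]
    by (subst LieP_cong[OF fin, where da'="\<lambda>k A. pdx idx k (\<lambda>t' x'. \<Theta>1 t' x' A) t x + pdx idx k (\<lambda>t' x'. \<Theta>2 t' x' A) t x"])
       (auto simp: pdx_add(1)[OF dx1 dx2] LieP_add)
  have P: "pdt (\<lambda>t' x'. \<Theta>1 t' x' S + \<Theta>2 t' x' S) t x = pdt (\<lambda>t' x'. \<Theta>1 t' x' S) t x + pdt (\<lambda>t' x'. \<Theta>2 t' x' S) t x"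
    by (rule pdt_add(1)[OF dt1 dt2])
  show "pdt (\<lambda>t' x'. \<Theta>1 t' x' S + \<Theta>2 t' x' S) t x + lie idx u (\<lambda>t x S. \<Theta>1 t x S + \<Theta>2 t x S) t x S = 0"
  proof -
    have "pdt (\<lambda>t' x'. \<Theta>1 t' x' S) t x + lie idx u \<Theta>1 t x S = 0" using i1 t SD unfolding lie_invariant_def by blast
    moreover have "pdt (\<lambda>t' x'. \<Theta>2 t' x' S) t x + lie idx u \<Theta>2 t x S = 0" using i2 t SD unfolding lie_invariant_def by blast
    ultimately show ?thesis unfolding L P by linarith
  qed
qed

end


lemma card2_sorted:
  fixes S :: "nat set"
  assumes "card S = 2" shows "\<exists>a b. a < b \<and> S = {a, b}"
proof -
  obtain x y where xy: "S = {x, y}" "x \<noteq> y" using assms unfolding card_2_iff by blast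
  show ?thesis
  proof (cases "x < y")
    case True thus ?thesis using xy by blast
  next
    case False hence "y < x" using xy(2) by simp
    moreover have "S = {y, x}" using xy by auto
    ultimately show ?thesis by blast
  qed
qed

lemma card3_sorted:
  fixes S :: "nat set"
  assumes "card S = 3" shows "\<exists>a b c. a < b \<and> b < c \<and> S = {a, b, c}"
proof -
  have fin: "finite S" and ne: "S \<noteq> {}" using assms by (auto intro: card_ge_0_finite)
  define a where "a = Min S"
  have aS: "a \<in> S" using fin ne by (simp add: a_def)
  have "card (S - {a}) = 2" using assms aS fin by simp
  then obtain b c where bc: "b < c" "S - {a} = {b, c}" using card2_sorted by blast
  have "b \<in> S" "b \<noteq> a" using bc by auto
  moreover have "a \<le> b" using fin \<open>b \<in> S\<close> unfolding a_def by (rule Min_le)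
  ultimately have "a < b" by simp
  moreover have "S = {a, b, c}" using bc aS by auto
  ultimately show ?thesis using bc by blast
qed

context fixes idx :: "nat \<Rightarrow> 'n::finite" begin

lemma pdits_zero: "pdits idx js (\<lambda>t x. 0) = (\<lambda>t x. 0)"
  by (induction js) (auto simp: pdir_def pdt_const pdx_const intro!: ext)

lemma smooth_zero: "smooth_tx idx T (\<lambda>t x. 0)"
  unfolding smooth_tx_def pdits_zero by simp

lemma ucomp_out: "j \<notin> {1..CARD('n)} \<Longrightarrow> ucomp idx u j = (\<lambda>t x. 0)"
  by (auto simp: ucomp_def intro!: ext)

lemma dform_1form:
  assumes one: "\<And>t x A. finite A \<Longrightarrow> card A \<noteq> 1 \<Longrightarrow> \<Theta> t x A = 0"
  shows "card S \<noteq> 2 \<Longrightarrow> dform idx \<Theta> t x S = 0"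
    and "k < l \<Longrightarrow> dform idx \<Theta> t x {k, l} = pdx idx k (\<lambda>t x. \<Theta> t x {l}) t x - pdx idx l (\<lambda>t x. \<Theta> t x {k}) t x"
proof -
  assume c: "card S \<noteq> 2"
  show "dform idx \<Theta> t x S = 0"
  proof (cases "finite S")
    case True
    show ?thesis unfolding dform_def
    proof (intro sum.neutral ballI)
      fix k assume k: "k \<in> S"
      have "card (S - {k}) \<noteq> 1" using c k True by (simp add: card_Diff_singleton)
      hence "\<And>t' x'. \<Theta> t' x' (S - {k}) = 0" using one True by simp
      thus "(-1) ^ card {s \<in> S. s < k} * pdx idx k (\<lambda>t' x'. \<Theta> t' x' (S - {k})) t x = 0"
        by (simp add: pdx_zero_fun)
    qed
  qed (simp add: dform_def)
next
  assume kl: "k < l"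
  have e1: "{s \<in> {k, l}. s < k} = {}" and e2: "{s \<in> {k, l}. s < l} = {k}" using kl by auto
  have e3: "{k, l} - {k} = {l}" and e4: "{k, l} - {l} = {k}" using kl by auto
  show "dform idx \<Theta> t x {k, l} = pdx idx k (\<lambda>t x. \<Theta> t x {l}) t x - pdx idx l (\<lambda>t x. \<Theta> t x {k}) t x"
  proof -
    have sum2: "(\<Sum>j\<in>{k, l}. g j) = g k + g l" for g :: "nat \<Rightarrow> real" using kl by simp
    show ?thesis unfolding dform_def sum2 e1 e2 e3 e4 by simp
  qed
qed

lemma iprod_2form:
  assumes two: "\<And>t x A. card A \<noteq> 2 \<Longrightarrow> \<Theta> t x A = 0"
    and W: "\<And>t x k l. k < l \<Longrightarrow> \<Theta> t x {k, l} = W k l t x"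
    and Wa: "\<And>t x k l. W l k t x = - W k l t x"
  shows "finite A \<Longrightarrow> card A \<noteq> 1 \<Longrightarrow> iprod idx u \<Theta> t x A = 0"
    and "iprod idx u \<Theta> t x {l} = (\<Sum>j\<in>{1..CARD('n)}. ucomp idx u j t x * W j l t x)"
proof -
  assume fin: "finite A" and c: "card A \<noteq> 1"
  show "iprod idx u \<Theta> t x A = 0" unfolding iprod_def
  proof (intro sum.neutral ballI)
    fix j assume "j \<in> {1..CARD('n)} - A"
    hence "card (insert j A) \<noteq> 2" using fin c by simp
    thus "(-1) ^ card {s \<in> A. s < j} * ucomp idx u j t x * \<Theta> t x (insert j A) = 0" using two by simp
  qed
next
  have W0: "W l l t x = 0" using Wa[of l l t x] by simp
  have "iprod idx u \<Theta> t x {l} = (\<Sum>j\<in>{1..CARD('n)} - {l}. ucomp idx u j t x * W j l t x)"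
    unfolding iprod_def
  proof (intro sum.cong refl)
    fix j assume j: "j \<in> {1..CARD('n)} - {l}"
    show "(-1) ^ card {s \<in> {l}. s < j} * ucomp idx u j t x * \<Theta> t x (insert j {l}) = ucomp idx u j t x * W j l t x"
    proof (cases "j < l")
      case True
      have e: "{s \<in> {l}. s < j} = {}" using True by auto
      show ?thesis unfolding e using W[OF True] by simp
    next
      case False
      hence lj: "l < j" using j by auto
      have e: "{s \<in> {l}. s < j} = {l}" using lj by auto
      have e2: "insert j {l} = {l, j}" by auto
      show ?thesis unfolding e e2 using W[OF lj] Wa[of j l] by simp
    qed
  qed
  also have "\<dots> = (\<Sum>j\<in>{1..CARD('n)}. ucomp idx u j t x * W j l t x)"
    by (rule sum.mono_neutral_left) (auto simp: W0)
  finally show "iprod idx u \<Theta> t x {l} = (\<Sum>j\<in>{1..CARD('n)}. ucomp idx u j t x * W j l t x)" .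
qed

lemma dform_2form_zero:
  assumes two: "\<And>t x A. card A \<noteq> 2 \<Longrightarrow> \<Theta> t x A = 0"
    and W: "\<And>t x k l. k < l \<Longrightarrow> \<Theta> t x {k, l} = W k l t x"
    and cyc: "\<And>a b c. a < b \<Longrightarrow> b < c \<Longrightarrow>
        pdx idx a (W b c) t x - pdx idx b (W a c) t x + pdx idx c (W a b) t x = 0"
  shows "dform idx \<Theta> t x S = 0"
proof (cases "card S = 3")
  case False
  show ?thesis
  proof (cases "finite S")
    case True
    show ?thesis unfolding dform_def
    proof (intro sum.neutral ballI)
      fix k assume k: "k \<in> S"
      have "card (S - {k}) \<noteq> 2" using False k True by (simp add: card_Diff_singleton)
      hence "\<And>t' x'. \<Theta> t' x' (S - {k}) = 0" using two by simp
      thus "(-1) ^ card {s \<in> S. s < k} * pdx idx k (\<lambda>t' x'. \<Theta> t' x' (S - {k})) t x = 0"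
        by (simp add: pdx_zero_fun)
    qed
  qed (simp add: dform_def)
next
  case True
  then obtain a b c where abc: "a < b" "b < c" "S = {a, b, c}" using card3_sorted by blast
  have s1: "{s \<in> {a, b, c}. s < a} = {}" "{s \<in> {a, b, c}. s < b} = {a}" "{s \<in> {a, b, c}. s < c} = {a, b}"
    using abc by auto
  have d1: "{a, b, c} - {a} = {b, c}" "{a, b, c} - {b} = {a, c}" "{a, b, c} - {c} = {a, b}" using abc by auto
  have f1: "pdx idx a (\<lambda>t' x'. \<Theta> t' x' {b, c}) t x = pdx idx a (W b c) t x" using W[OF abc(2)] by (intro pdx_cong) simp
  have f2: "pdx idx b (\<lambda>t' x'. \<Theta> t' x' {a, c}) t x = pdx idx b (W a c) t x" using W[of a c] abc by (intro pdx_cong) simp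
  have f3: "pdx idx c (\<lambda>t' x'. \<Theta> t' x' {a, b}) t x = pdx idx c (W a b) t x" using W[OF abc(1)] by (intro pdx_cong) simp
  have "dform idx \<Theta> t x S = pdx idx a (W b c) t x - pdx idx b (W a c) t x + pdx idx c (W a b) t x"
  proof -
    have sum3: "(\<Sum>k\<in>{a, b, c}. g k) = g a + g b + g c" for g :: "nat \<Rightarrow> real" using abc(1,2) by simp
    have cc: "card {a} = 1" "card {a, b} = 2" using abc by auto
    show ?thesis unfolding dform_def abc(3) sum3 s1 d1 f1 f2 f3 cc by simp
  qed
  thus ?thesis using cyc[OF abc(1,2)] by simp
qed

end


lemma pdx_chain:
  assumes F: "(F has_real_derivative F') (at (f t x))" and f: "dxk idx k f t x"
  shows "pdx idx k (\<lambda>t x. F (f t x)) t x = F' * pdx idx k f t x"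
    and "dxk idx k (\<lambda>t x. F (f t x)) t x"
proof -
  have *: "((\<lambda>s. F (f t (x + s *\<^sub>R axis (idx k) 1))) has_real_derivative F' * pdx idx k f t x) (at 0)"
    if k: "k \<in> {1..CARD('a)}"
    using DERIV_chain'[OF pdx_DERIV[OF k f]] F by simp
  show "pdx idx k (\<lambda>t x. F (f t x)) t x = F' * pdx idx k f t x"
    by (cases "k \<in> {1..CARD('a)}") (auto simp: pdx_out intro!: pdx_via *)
  show "dxk idx k (\<lambda>t x. F (f t x)) t x"
    by (rule dxk_I) (rule *)
qed

definition Gf :: "(nat \<Rightarrow> 'n::finite) \<Rightarrow> (real \<Rightarrow> real) \<Rightarrow> 'n sfield \<Rightarrow> nat \<Rightarrow> 'n sfield" where
  "Gf idx p \<rho> l t x = pdx idx l (\<lambda>t x. p (\<rho> t x)) t x / \<rho> t x"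

lemma blk_iff:
  fixes i n :: nat assumes "i \<ge> 1"
  shows "(n + 1) div 2 = i \<longleftrightarrow> n = 2 * i - 1 \<or> n = 2 * i"
  using assms by presburger

locale flow =
  fixes idx :: "nat \<Rightarrow> 'n::finite" and T :: "real set" and u :: "real \<Rightarrow> real^'n \<Rightarrow> real^'n"
    and \<rho> :: "real \<Rightarrow> real^'n \<Rightarrow> real" and p :: "real \<Rightarrow> real"
  assumes T_open: "open T"
    and u_smooth: "\<forall>j\<in>{1..CARD('n)}. smooth_tx idx T (ucomp idx u j)"
    and rho_smooth: "smooth_tx idx T \<rho>"
    and rho_pos: "\<forall>t\<in>T. \<forall>x. \<rho> t x > 0"
    and p_smooth: "smooth_pos p"
    and momentum: "\<forall>t\<in>T. \<forall>x. \<forall>j\<in>{1..CARD('n)}.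
        pdt (ucomp idx u j) t x
        + (\<Sum>k\<in>{1..CARD('n)}. ucomp idx u k t x * pdx idx k (ucomp idx u j) t x)
        = - pdx idx j (\<lambda>t' x'. p (\<rho> t' x')) t x / \<rho> t x"
    and schur: "\<forall>t\<in>T. \<forall>x. \<forall>k\<in>{1..CARD('n)}. \<forall>j\<in>{1..CARD('n)}.
        (k + 1) div 2 > (j + 1) div 2 \<longrightarrow> pdx idx k (ucomp idx u j) t x = 0"
begin

lemma usm: "smooth_tx idx T (ucomp idx u j)"
proof (cases "j \<in> {1..CARD('n)}")
  case True thus ?thesis using u_smooth by blast
next
  case False thus ?thesis by (simp add: ucomp_out smooth_zero)
qed

lemma du: "\<forall>t\<in>T. \<forall>x j k. dxk idx k (ucomp idx u j) t x"
  using smooth_dxk[OF usm] by blast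

lemma p_der: "r > 0 \<Longrightarrow> (p has_real_derivative deriv p r) (at r)"
  using p_smooth unfolding smooth_pos_def
  by (metis DERIV_deriv_iff_field_differentiable funpow_0)

lemma q_der: "r > 0 \<Longrightarrow> ((\<lambda>r. deriv p r / r) has_real_derivative deriv (\<lambda>r. deriv p r / r) r) (at r)"
proof -
  assume r: "r > 0"
  have "((deriv ^^ 1) p) field_differentiable (at r)"
    using p_smooth r unfolding smooth_pos_def by blast
  hence "(deriv p has_real_derivative deriv (deriv p) r) (at r)"
    by (simp add: DERIV_deriv_iff_field_differentiable)
  hence "((\<lambda>r. deriv p r / r) has_real_derivative (deriv (deriv p) r * r - deriv p r * 1) / (r * r)) (at r)"
    by (rule DERIV_divide[OF _ DERIV_ident]) (use r in auto)
  thus ?thesis using DERIV_imp_deriv by metis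
qed

lemma G_form:
  assumes t: "t \<in> T"
  shows "Gf idx p \<rho> l t y = deriv p (\<rho> t y) / \<rho> t y * pdx idx l \<rho> t y"
  unfolding Gf_def
  using pdx_chain(1)[OF p_der[OF rho_pos[rule_format, OF t]] smooth_dxk[OF rho_smooth t]] by simp

lemma G_sym:
  assumes t: "t \<in> T"
  shows "pdx idx k (Gf idx p \<rho> l) t x = pdx idx l (Gf idx p \<rho> k) t x"
proof -
  let ?q = "\<lambda>r. deriv p r / r"
  have e: "pdx idx k (Gf idx p \<rho> l) t x = deriv ?q (\<rho> t x) * pdx idx k \<rho> t x * pdx idx l \<rho> t x + ?q (\<rho> t x) * pdx idx k (pdx idx l \<rho>) t x"
    for k l
  proof -
    have "pdx idx k (Gf idx p \<rho> l) t x = pdx idx k (\<lambda>t y. ?q (\<rho> t y) * pdx idx l \<rho> t y) t x"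
      by (rule pdx_cong) (simp add: G_form[OF t])
    also have "\<dots> = pdx idx k (\<lambda>t y. ?q (\<rho> t y)) t x * pdx idx l \<rho> t x + ?q (\<rho> t x) * pdx idx k (pdx idx l \<rho>) t x"
      by (rule pdx_mult(1)[OF pdx_chain(2)[OF q_der[OF rho_pos[rule_format, OF t]] smooth_dxk[OF rho_smooth t]] smooth_dxk_dxk[OF rho_smooth t]])
    also have "pdx idx k (\<lambda>t y. ?q (\<rho> t y)) t x = deriv ?q (\<rho> t x) * pdx idx k \<rho> t x"
      by (rule pdx_chain(1)[OF q_der[OF rho_pos[rule_format, OF t]] smooth_dxk[OF rho_smooth t]])
    finally show ?thesis .
  qed
  show ?thesis unfolding e schwarz_x[OF rho_smooth T_open t, of k l] by simp
qed

lemma mom_G: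
  assumes t: "t \<in> T" and l: "l \<in> {1..CARD('n)}"
  shows "Gf idx p \<rho> l t y = - pdt (ucomp idx u l) t y - (\<Sum>m\<in>{1..CARD('n)}. ucomp idx u m t y * pdx idx m (ucomp idx u l) t y)"
proof -
  have "pdt (ucomp idx u l) t y + (\<Sum>k\<in>{1..CARD('n)}. ucomp idx u k t y * pdx idx k (ucomp idx u l) t y)
        = - pdx idx l (\<lambda>t' x'. p (\<rho> t' x')) t y / \<rho> t y" using momentum t l by blast
  thus ?thesis unfolding Gf_def by simp
qed

lemma dxk_G:
  assumes t: "t \<in> T"
  shows "dxk idx k (Gf idx p \<rho> l) t x"
proof -
  have "dxk idx k (\<lambda>t y. deriv p (\<rho> t y) / \<rho> t y * pdx idx l \<rho> t y) t x"
    by (rule pdx_mult(2)[OF pdx_chain(2)[OF q_der[OF rho_pos[rule_format, OF t]] smooth_dxk[OF rho_smooth t]] smooth_dxk_dxk[OF rho_smooth t]])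
  thus ?thesis by (subst dxk_cong[where g="\<lambda>t y. deriv p (\<rho> t y) / \<rho> t y * pdx idx l \<rho> t y"]) (auto simp: G_form[OF t])
qed

lemma G_schur:
  assumes t: "t \<in> T" and k: "k \<in> {1..CARD('n)}" and l: "l \<in> {1..CARD('n)}"
    and kl: "(k + 1) div 2 > (l + 1) div 2"
  shows "pdx idx k (Gf idx p \<rho> l) t x = 0"
proof -
  let ?D = "{1..CARD('n)}"
  have z: "pdx idx k (ucomp idx u l) s y = 0" if "s \<in> T" for s y
    using schur that k l kl by blast
  have dpt: "dxk idx k (pdt (ucomp idx u l)) t x"
    using smooth_tx_D(3)[OF usm[of l], where js="[0]" and t=t and k=k and x=x] t by (simp add: pdir_def)
  have "pdx idx k (Gf idx p \<rho> l) t x = pdx idx k (\<lambda>t y. - pdt (ucomp idx u l) t y - (\<Sum>m\<in>?D. ucomp idx u m t y * pdx idx m (ucomp idx u l) t y)) t x"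
    by (rule pdx_cong) (simp add: mom_G[OF t l])
  also have "\<dots> = - pdx idx k (pdt (ucomp idx u l)) t x - (\<Sum>m\<in>?D. pdx idx k (ucomp idx u m) t x * pdx idx m (ucomp idx u l) t x
        + ucomp idx u m t x * pdx idx k (pdx idx m (ucomp idx u l)) t x)"
  proof -
    have d1: "dxk idx k (\<lambda>t y. - pdt (ucomp idx u l) t y) t x" using pdx_cmult(2)[OF dpt, of "-1"] by simp
    have p1: "pdx idx k (\<lambda>t y. - pdt (ucomp idx u l) t y) t x = - pdx idx k (pdt (ucomp idx u l)) t x"
      using pdx_cmult(1)[OF dpt, of "-1"] by simp
    have ds: "\<And>m. dxk idx k (\<lambda>t y. ucomp idx u m t y * pdx idx m (ucomp idx u l) t y) t x"
      using pdx_mult(2)[OF smooth_dxk[OF usm t] smooth_dxk_dxk[OF usm t]] by blast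
    show ?thesis
      unfolding pdx_diff(1)[OF d1 pdx_sum(2)[OF ds]] p1 pdx_sum(1)[OF ds]
        pdx_mult(1)[OF smooth_dxk[OF usm t] smooth_dxk_dxk[OF usm t]] ..
  qed
  also have "\<dots> = 0"
  proof -
    have a: "pdx idx k (pdt (ucomp idx u l)) t x = 0"
      unfolding schwarz_tx[OF usm T_open t, symmetric] by (rule pdt_zero_fun[OF T_open t]) (rule z)
    have b: "pdx idx k (pdx idx m (ucomp idx u l)) t x = 0" for m
    proof -
      have "pdx idx k (pdx idx m (ucomp idx u l)) t x = pdx idx m (pdx idx k (ucomp idx u l)) t x"
        by (rule schwarz_x[OF usm T_open t])
      also have "\<dots> = 0" by (rule pdx_zero_fun) (rule z[OF t])
      finally show ?thesis .
    qed
    have c: "pdx idx k (ucomp idx u m) t x * pdx idx m (ucomp idx u l) t x = 0" if m: "m \<in> ?D" for m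
    proof (cases "(m + 1) div 2 < (k + 1) div 2")
      case True thus ?thesis using schur t k m by auto
    next
      case False thus ?thesis using schur t m l kl by auto
    qed
    have "(\<Sum>m\<in>?D. pdx idx k (ucomp idx u m) t x * pdx idx m (ucomp idx u l) t x) = 0"
      using c by (intro sum.neutral) blast
    thus ?thesis unfolding a b by simp
  qed
  finally show ?thesis .
qed

end


definition bet :: "(nat \<Rightarrow> 'n::finite) \<Rightarrow> (real \<Rightarrow> real^'n \<Rightarrow> real^'n) \<Rightarrow> nat \<Rightarrow> nat \<Rightarrow> 'n sfield" where
  "bet idx u i l t x = alpha1 idx u i t x {l}"

definition Wf :: "(nat \<Rightarrow> 'n::finite) \<Rightarrow> (real \<Rightarrow> real^'n \<Rightarrow> real^'n) \<Rightarrow> nat \<Rightarrow> nat \<Rightarrow> nat \<Rightarrow> 'n sfield" where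
  "Wf idx u i k l t x = pdx idx k (bet idx u i l) t x - pdx idx l (bet idx u i k) t x"

definition Vf :: "(nat \<Rightarrow> 'n::finite) \<Rightarrow> (real \<Rightarrow> real^'n \<Rightarrow> real^'n) \<Rightarrow> nat \<Rightarrow> nat \<Rightarrow> 'n sfield" where
  "Vf idx u i l t x = (\<Sum>j\<in>{1..CARD('n)}. ucomp idx u j t x * Wf idx u i j l t x)"

definition inB :: "(nat \<Rightarrow> 'n::finite) \<Rightarrow> nat \<Rightarrow> nat \<Rightarrow> bool" where
  "inB idx i l \<longleftrightarrow> l \<in> {1..CARD('n)} \<and> (l = 2 * i - 1 \<or> l = 2 * i)"

context fixes idx :: "nat \<Rightarrow> 'n::finite" and u :: "real \<Rightarrow> real^'n \<Rightarrow> real^'n" and i :: nat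
begin

lemma bet_eq: "bet idx u i l = (if inB idx i l then ucomp idx u l else (\<lambda>t x. 0))"
  by (auto simp: bet_def alpha1_def inB_def ucomp_def intro!: ext)

lemma alpha1_1form: "card A \<noteq> 1 \<Longrightarrow> alpha1 idx u i t x A = 0"
  by (auto simp: alpha1_def)

lemma Omega_2form: "card A \<noteq> 2 \<Longrightarrow> Omega idx u i t x A = 0"
  unfolding Omega_def by (rule dform_1form(1)) (auto simp: alpha1_1form)

lemma Omega_W: "k < l \<Longrightarrow> Omega idx u i t x {k, l} = Wf idx u i k l t x"
  unfolding Omega_def Wf_def bet_def
  by (rule dform_1form(2)) (auto simp: alpha1_1form)

lemma Wf_anti: "Wf idx u i l k t x = - Wf idx u i k l t x"
  by (simp add: Wf_def)

lemma Wf_fun: "Wf idx u i k l = (\<lambda>t x. pdx idx k (bet idx u i l) t x - pdx idx l (bet idx u i k) t x)"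
  by (simp add: Wf_def fun_eq_iff)

lemma Vf_fun: "Vf idx u i l = (\<lambda>t x. \<Sum>j\<in>{1..CARD('n)}. ucomp idx u j t x * Wf idx u i j l t x)"
  by (simp add: Vf_def fun_eq_iff)

lemma iprod_Omega:
  shows "finite A \<Longrightarrow> card A \<noteq> 1 \<Longrightarrow> iprod idx u (Omega idx u i) t x A = 0"
    and "iprod idx u (Omega idx u i) t x {l} = Vf idx u i l t x"
  using iprod_2form[of "Omega idx u i" "Wf idx u i", OF Omega_2form Omega_W Wf_anti]
  by (auto simp: Vf_def)

end

context flow begin

lemma bet_smooth: "smooth_tx idx T (bet idx u i l)"
  by (simp add: bet_eq usm smooth_zero)

lemma cyc:
  assumes t: "t \<in> T"
  shows "pdx idx a (Wf idx u i b c) t x - pdx idx b (Wf idx u i a c) t x + pdx idx c (Wf idx u i a b) t x = 0"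
proof -
  have e: "pdx idx a (Wf idx u i b c) t x = pdx idx a (pdx idx b (bet idx u i c)) t x - pdx idx a (pdx idx c (bet idx u i b)) t x"
    for a b c unfolding Wf_fun by (rule pdx_diff(1)) (rule smooth_dxk_dxk[OF bet_smooth t])+
  show ?thesis unfolding e
    using schwarz_x[OF bet_smooth T_open t, of a b i c] schwarz_x[OF bet_smooth T_open t, of a c i b]
      schwarz_x[OF bet_smooth T_open t, of b c i a]
    by simp
qed

lemma Omega_reg: "regx idx T (Omega idx u i)" "regt T (Omega idx u i)"
proof -
  have "dxk idx k (\<lambda>t' x'. Omega idx u i t' x' A) t x \<and> dtt (\<lambda>t' x'. Omega idx u i t' x' A) t x"
    if t: "t \<in> T" for t x A k
  proof (cases "card A = 2")
    case False
    hence e: "(\<lambda>t' x'. Omega idx u i t' x' A) = (\<lambda>t' x'. 0)" by (simp add: Omega_2form)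
    show ?thesis unfolding e by (simp add: dxk_const dtt_const)
  next
    case True
    then obtain k1 k2 where kk: "k1 < k2" "A = {k1, k2}" using card2_sorted by blast
    have e: "(\<lambda>t' x'. Omega idx u i t' x' A) = Wf idx u i k1 k2"
      unfolding kk(2) by (auto simp: Omega_W[OF kk(1)] intro!: ext)
    show ?thesis unfolding e Wf_fun
      by (intro conjI pdx_diff(2) pdt_diff(2) smooth_dxk_dxk[OF bet_smooth t] smooth_dtt_dxk[OF bet_smooth t])
  qed
  thus "regx idx T (Omega idx u i)" "regt T (Omega idx u i)" unfolding regx_def regt_def by auto
qed

end


context flow begin

lemma core:
  assumes t: "t \<in> T" and k: "k \<in> {1..CARD('n)}" and l: "l \<in> {1..CARD('n)}" and i: "i \<ge> 1"
  shows "pdt (Wf idx u i k l) t x + (pdx idx k (Vf idx u i l) t x - pdx idx l (Vf idx u i k) t x) = 0"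
proof -
  let ?D = "{1..CARD('n)}"
  let ?b = "bet idx u i"
  let ?U = "\<lambda>m. ucomp idx u m t x"
  let ?DU = "\<lambda>k m. pdx idx k (ucomp idx u m) t x"
  let ?DB = "\<lambda>k l. pdx idx k (?b l) t x"
  let ?DDB = "\<lambda>k m l. pdx idx k (pdx idx m (?b l)) t x"
  let ?G = "\<lambda>k l. if inB idx i l then pdx idx k (Gf idx p \<rho> l) t x else 0"
  have F1: "pdt (Wf idx u i k l) t x = pdx idx k (pdt (?b l)) t x - pdx idx l (pdt (?b k)) t x"
    unfolding Wf_fun pdt_diff(1)[OF smooth_dtt_dxk[OF bet_smooth t] smooth_dtt_dxk[OF bet_smooth t]]
    using schwarz_tx[OF bet_smooth T_open t] by simp
  have F2: "pdx idx k (pdt (?b l)) t x = - (\<Sum>m\<in>?D. ?DU k m * ?DB m l + ?U m * ?DDB k m l) - ?G k l" for k l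
  proof (cases "inB idx i l")
    case False
    hence z: "?b l = (\<lambda>t x. 0)" by (simp add: bet_eq)
    have z2: "pdt (\<lambda>t x. 0::real) = (\<lambda>t (x::real^'n). 0)" by (simp add: pdt_const fun_eq_iff)
    have z3: "pdx idx m (\<lambda>t x. 0::real) = (\<lambda>t (x::real^'n). 0)" for m by (simp add: pdx_const fun_eq_iff)
    show ?thesis unfolding z z2 using False by (simp add: pdx_const z3)
  next
    case True
    hence z: "?b l = ucomp idx u l" and lD: "l \<in> ?D" by (simp_all add: bet_eq inB_def)
    have "pdx idx k (pdt (ucomp idx u l)) t x = pdx idx k (\<lambda>t y. - Gf idx p \<rho> l t y - (\<Sum>m\<in>?D. ucomp idx u m t y * pdx idx m (ucomp idx u l) t y)) t x"
      by (rule pdx_cong) (simp add: mom_G[OF t lD])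
    also have "\<dots> = - pdx idx k (Gf idx p \<rho> l) t x - (\<Sum>m\<in>?D. ?DU k m * pdx idx m (ucomp idx u l) t x + ?U m * pdx idx k (pdx idx m (ucomp idx u l)) t x)"
    proof -
      have dG: "dxk idx k (\<lambda>t y. - Gf idx p \<rho> l t y) t x" using pdx_cmult(2)[OF dxk_G[OF t], where c="-1"] by simp
      have pG: "pdx idx k (\<lambda>t y. - Gf idx p \<rho> l t y) t x = - pdx idx k (Gf idx p \<rho> l) t x"
        using pdx_cmult(1)[OF dxk_G[OF t], where c="-1"] by simp
      have ds: "\<And>m. dxk idx k (\<lambda>t y. ucomp idx u m t y * pdx idx m (ucomp idx u l) t y) t x"
        using pdx_mult(2)[OF smooth_dxk[OF usm t] smooth_dxk_dxk[OF usm t]] by blast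
      show ?thesis
        unfolding pdx_diff(1)[OF dG pdx_sum(2)[OF ds]] pG pdx_sum(1)[OF ds]
          pdx_mult(1)[OF smooth_dxk[OF usm t] smooth_dxk_dxk[OF usm t]] ..
    qed
    finally show ?thesis unfolding z using True by simp
  qed
  have F3: "pdx idx k (Vf idx u i l) t x = (\<Sum>j\<in>?D. ?DU k j * (?DB j l - ?DB l j) + ?U j * (?DDB k j l - ?DDB k l j))" for k l
  proof -
    have dW: "\<And>j. dxk idx k (Wf idx u i j l) t x" unfolding Wf_fun
      by (rule pdx_diff(2)) (rule smooth_dxk_dxk[OF bet_smooth t])+
    have pW: "\<And>j. pdx idx k (Wf idx u i j l) t x = ?DDB k j l - ?DDB k l j" unfolding Wf_fun
      by (rule pdx_diff(1)) (rule smooth_dxk_dxk[OF bet_smooth t])+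
    have ds: "\<And>j. dxk idx k (\<lambda>t x. ucomp idx u j t x * Wf idx u i j l t x) t x"
      using pdx_mult(2)[OF smooth_dxk[OF usm t] dW] by blast
    show ?thesis unfolding Vf_fun pdx_sum(1)[OF ds] pdx_mult(1)[OF smooth_dxk[OF usm t] dW] pW
      by (simp add: Wf_def)
  qed
  have F4: "?DDB k l j = ?DDB l k j" for j by (rule schwarz_x[OF bet_smooth T_open t])
  have F5: "?DB m j = (if inB idx i j then ?DU m j else 0)" for m j
    by (simp add: bet_eq pdx_const)
  have "pdt (Wf idx u i k l) t x + (pdx idx k (Vf idx u i l) t x - pdx idx l (Vf idx u i k) t x)
      = ?G l k - ?G k l + (\<Sum>j\<in>?D. (?DU l j * ?DB k j - ?DU k j * ?DB l j) + ?U j * (?DDB l k j - ?DDB k l j))"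
    unfolding F1 F2 F3
    by (simp add: sum.distrib sum_subtractf algebra_simps)
  also have "(\<Sum>j\<in>?D. (?DU l j * ?DB k j - ?DU k j * ?DB l j) + ?U j * (?DDB l k j - ?DDB k l j)) = 0"
    by (intro sum.neutral ballI) (simp add: F4 F5)
  also have "?G l k - ?G k l = 0"
  proof -
    have blk: "inB idx i n \<longleftrightarrow> n \<in> ?D \<and> (n + 1) div 2 = i" for n
      unfolding inB_def using blk_iff[OF i] by blast
    have sym: "pdx idx l (Gf idx p \<rho> k) t x = pdx idx k (Gf idx p \<rho> l) t x" by (rule G_sym[OF t])
    have z1: "pdx idx l (Gf idx p \<rho> k) t x = 0" if "inB idx i k" "\<not> inB idx i l"
    proof (cases "(l + 1) div 2 > (k + 1) div 2")
      case True thus ?thesis using G_schur[OF t l k] by blast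
    next
      case False
      hence "(k + 1) div 2 > (l + 1) div 2" using that blk l by auto
      thus ?thesis unfolding sym using G_schur[OF t k l] by blast
    qed
    have z2: "pdx idx k (Gf idx p \<rho> l) t x = 0" if "inB idx i l" "\<not> inB idx i k"
    proof (cases "(k + 1) div 2 > (l + 1) div 2")
      case True thus ?thesis using G_schur[OF t k l] by blast
    next
      case False
      hence "(l + 1) div 2 > (k + 1) div 2" using that blk k by auto
      thus ?thesis unfolding sym[symmetric] using G_schur[OF t l k] by blast
    qed
    show ?thesis using sym z1 z2 by auto
  qed
  finally show ?thesis by simp
qed

end


context flow begin

lemma Omega_inv:
  assumes i: "i \<ge> 1"
  shows "lie_invariant idx T u (Omega idx u i)"
  unfolding lie_invariant_def
proof (intro ballI allI impI)
  fix t x S assume t: "t \<in> T" and SD: "S \<subseteq> {1..CARD('n)}"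
  let ?\<Omega> = "Omega idx u i"
  have Z: "iprod idx u (dform idx ?\<Omega>) t x S = 0"
    unfolding iprod_def
    by (intro sum.neutral ballI)
       (simp add: dform_2form_zero[of ?\<Omega> "Wf idx u i", OF Omega_2form Omega_W cyc[OF t]])
  have one: "\<And>t x A. finite A \<Longrightarrow> card A \<noteq> 1 \<Longrightarrow> iprod idx u ?\<Omega> t x A = 0"
    by (rule iprod_Omega(1))
  show "pdt (\<lambda>t' x'. ?\<Omega> t' x' S) t x + lie idx u ?\<Omega> t x S = 0"
  proof (cases "card S = 2")
    case False
    have e: "(\<lambda>t' x'. ?\<Omega> t' x' S) = (\<lambda>t' x'. 0)" using False by (simp add: Omega_2form)
    have "dform idx (iprod idx u ?\<Omega>) t x S = 0" by (rule dform_1form(1)[OF one False])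
    thus ?thesis unfolding lie_def Z e by (simp add: pdt_const)
  next
    case True
    then obtain k l where kl: "k < l" "S = {k, l}" using card2_sorted by blast
    have k: "k \<in> {1..CARD('n)}" and l: "l \<in> {1..CARD('n)}" using SD kl by auto
    have e: "(\<lambda>t' x'. ?\<Omega> t' x' S) = Wf idx u i k l" unfolding kl(2)
      by (auto simp: Omega_W[OF kl(1)] intro!: ext)
    have ev: "(\<lambda>t x. iprod idx u ?\<Omega> t x {m}) = Vf idx u i m" for m
      by (auto simp: iprod_Omega(2) intro!: ext)
    have "dform idx (iprod idx u ?\<Omega>) t x {k, l} = pdx idx k (\<lambda>t x. iprod idx u ?\<Omega> t x {l}) t x - pdx idx l (\<lambda>t x. iprod idx u ?\<Omega> t x {k}) t x"
      by (rule dform_1form(2)[OF one kl(1)])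
    hence "dform idx (iprod idx u ?\<Omega>) t x S = pdx idx k (Vf idx u i l) t x - pdx idx l (Vf idx u i k) t x"
      unfolding kl(2) ev .
    thus ?thesis unfolding lie_def Z e using core[OF t k l i] by simp
  qed
qed

end

theorem corollary1:
  fixes idx :: "nat \<Rightarrow> 'n::finite"
    and T :: "real set"
    and u :: "real \<Rightarrow> real^'n \<Rightarrow> real^'n"
    and \<rho> :: "real \<Rightarrow> real^'n \<Rightarrow> real"
    and p :: "real \<Rightarrow> real"
    and \<Theta> :: "'n tform"
  assumes dim: "CARD('n) \<ge> 3"
    and coords: "bij_betw idx {1..CARD('n)} (UNIV :: 'n set)"
    and T_open: "open T"
    and u_smooth: "\<forall>j\<in>{1..CARD('n)}. smooth_tx idx T (ucomp idx u j)"
    and rho_smooth: "smooth_tx idx T \<rho>"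
    and rho_pos: "\<forall>t\<in>T. \<forall>x. \<rho> t x > 0"
    and p_smooth: "smooth_pos p"
    and momentum: "\<forall>t\<in>T. \<forall>x. \<forall>j\<in>{1..CARD('n)}.
        pdt (ucomp idx u j) t x
        + (\<Sum>k\<in>{1..CARD('n)}. ucomp idx u k t x * pdx idx k (ucomp idx u j) t x)
        = - pdx idx j (\<lambda>t' x'. p (\<rho> t' x')) t x / \<rho> t x"
    and mass: "\<forall>t\<in>T. \<forall>x.
        pdt \<rho> t x
        + (\<Sum>k\<in>{1..CARD('n)}. pdx idx k (\<lambda>t' x'. \<rho> t' x' * ucomp idx u k t' x') t x) = 0"
    and schur: "\<forall>t\<in>T. \<forall>x. \<forall>k\<in>{1..CARD('n)}. \<forall>j\<in>{1..CARD('n)}.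
        (k + 1) div 2 > (j + 1) div 2 \<longrightarrow> pdx idx k (ucomp idx u j) t x = 0"
    and gen: "\<Theta> \<in> gen_forms idx u ((CARD('n) + 1) div 2)"
  shows "lie_invariant idx T u \<Theta>"
proof -
  interpret flow idx T u \<rho> p
    using T_open u_smooth rho_smooth rho_pos p_smooth momentum schur by unfold_locales
  have "regx idx T \<Theta> \<and> regt T \<Theta> \<and> lie_invariant idx T u \<Theta>"
    using gen
  proof (induction rule: gen_forms.induct)
    case (base i)
    hence "i \<ge> 1" by simp
    thus ?case using Omega_reg Omega_inv by blast
  next
    case (scale \<Theta> c)
    thus ?case using scale_reg scale_inv[OF du] by blast
  next
    case (add \<Theta>1 \<Theta>2)
    thus ?case using add_reg add_inv[OF du] by blast
  next
    case (wedge \<Theta>1 \<Theta>2)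
    thus ?case using wedge_reg wedge_inv[OF du] by blast
  qed
  thus ?thesis by blast
qed


end
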